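(* Let $n_{xL},n_{yL},n_{xR},n_{yR}\ge 2$ and let $h_{xL},h_{xR}>0$. Assume: (i) $H_{xL}\in\mathbb{R}^{n_{xL}\times n_{xL}}$, $H_{yL}\in\mathbb{R}^{n_{yL}\times n_{yL}}$, $H_{xR}\in\mathbb{R}^{n_{xR}\times n_{xR}}$, $H_{yR}\in\mathbb{R}^{n_{yR}\times n_{yR}}$ are diagonal positive definite; (ii) $M_{xL}, M_{xR}$ are symmetric and can be written as $M_{xL}=\tilde M_{xL}+h_{xL}\alpha(E_{0L}S_{xL})^T(E_{0L}S_{xL})$, $M_{xR}=\tilde M_{xR}+h_{xR}\alpha(E_{0R}S_{xR})^T(E_{0R}S_{xR})$ with $\tilde M_{xL},\tilde M_{xR}$ symmetric positive semidefinite and a constant $\alpha>0$, where $S_{xL}\in\mathbb{R}^{n_{xL}\times n_{xL}}$, $S_{xR}\in\mathbb{R}^{n_{xR}\times n_{xR}}$ are arbitrary real matrices; (iii) $I_{F2C}\in\mathbb{R}^{n_{yL}\times n_{yR}}$, $I_{C2F}\in\mathbb{R}^{n_{yR}\times n_{yL}}$ satisfy $H_{yR}I_{C2F}=(H_{yL}I_{F2C})^T$ and both $H_{yL}(I_{yL}-I_{F2C}I_{C2F})$ and $H_{yR}(I_{yR}-I_{C2F}I_{F2C})$ are positive semidefinite; (iv) $\tau\ge\max\big(\frac{1}{2\alpha h_{xL}},\frac{1}{2\alpha h_{xR}}\big)$ (in particular, if $h_{xR}=h_{xL}/2$ this reads $\tau\ge \frac{1}{\alpha h_{xL}}$). Consider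 the semidiscrete system (boldface denotes Kronecker extension: $\mathbf{A}_{xL}=A_{xL}\otimes I_{yL}$, $\mathbf{A}_{xR}=A_{xR}\otimes I_{yR}$) $$\mathbf{u}_{tt}=\big(H_{xL}^{-1}(-M_{xL}+E_{0L}S_{xL})\otimes I_{yL}\big)\mathbf{u}+\tfrac12\mathbf{H}_{xL}^{-1}\mathbf{S}_{xL}^T\mathbf{w}_L-\tau\mathbf{H}_{xL}^{-1}\mathbf{w}_L-\tfrac12\mathbf{H}_{xL}^{-1}\big(\mathbf{E}_{0L}\mathbf{S}_{xL}\mathbf{u}-(E_{LR}\otimes I_{F2C})\mathbf{S}_{xR}\mathbf{v}\big),$$ $$\mathbf{v}_{tt}=\big(H_{xR}^{-1}(-M_{xR}-E_{0R}S_{xR})\otimes I_{yR}\big)\mathbf{v}-\tfrac12\mathbf{H}_{xR}^{-1}\mathbf{S}_{xR}^T\mathbf{w}_R-\tau\mathbf{H}_{xR}^{-1}\mathbf{w}_R+\tfrac12\mathbf{H}_{xR}^{-1}\big(\mathbf{E}_{0R}\mathbf{S}_{xR}\mathbf{v}-(E_{RL}\otimes I_{C2F})\mathbf{S}_{xL}\mathbf{u}\big),$$ where $\mathbf{w}_L=\mathbf{E}_{0L}\mathbf{u}-(E_{LR}\otimes I_{F2C})\mathbf{v}$ and $\mathbf{w}_R=\mathbf{E}_{0R}\mathbf{v}-(E_{RL}\otimes I_{C2F})\mathbf{u}$. Define $$\begin{aligned}E=&\ \mathbf{u}_t^T(H_{xL}\otimes H_{yL})\mathbf{u}_t+\mathbf{v}_t^T(H_{xR}\otimes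 H_{yR})\mathbf{v}_t\\&+\mathbf{u}^T(M_{xL}\otimes H_{yL})\mathbf{u}-\mathbf{u}^T(E_{0L}S_{xL}\otimes H_{yL})\mathbf{u}+\tau\mathbf{u}^T(E_{0L}\otimes H_{yL})\mathbf{u}\\&+\mathbf{v}^T(M_{xR}\otimes H_{yR})\mathbf{v}+\mathbf{v}^T(E_{0R}S_{xR}\otimes H_{yR})\mathbf{v}+\tau\mathbf{v}^T(E_{0R}\otimes H_{yR})\mathbf{v}\\&+\mathbf{u}^T(S_{xL}^TE_{LR}\otimes H_{yL}I_{F2C})\mathbf{v}-\mathbf{v}^T(S_{xR}^TE_{RL}\otimes H_{yR}I_{C2F})\mathbf{u}-2\tau\mathbf{u}^T(E_{LR}\otimes H_{yL}I_{F2C})\mathbf{v}.\end{aligned}$$ Then $E\ge 0$ for all $\mathbf{u},\mathbf{u}_t\in\mathbb{R}^{n_{xL}n_{yL}}$, $\mathbf{v},\mathbf{v}_t\in\mathbb{R}^{n_{xR}n_{yR}}$, and $\frac{d}{dt}E=0$ along every smooth solution of the system; hence $E$ is a conserved nonnegative discrete energy (an energy estimate holds).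
   Context: This is the summation-by-parts / simultaneous-approximation-term (SBP–SAT) discretization of the 2D wave equation $U_{tt}=U_{xx}+U_{yy}$ on two blocks (left block $n_{xL}\times n_{yL}$ grid, right block $n_{xR}\times n_{yR}$ grid) meeting at a vertical interface (right edge of the left block, left edge of the right block); only $x$-direction terms and interface coupling terms are retained (outer boundary terms and $y$-derivative terms are omitted). Grid vectors use the $x$-index as the outer Kronecker index. $E_{0L}\in\mathbb{R}^{n_{xL}\times n_{xL}}$ has a single nonzero entry $1$ at $(n_{xL},n_{xL})$; $E_{0R}\in\mathbb{R}^{n_{xR}\times n_{xR}}$ has a single nonzero entry $1$ at $(1,1)$; $E_{LR}\in\mathbb{R}^{n_{xL}\times n_{xR}}$ has a single nonzero entry $1$ at $(n_{xL},1)$; $E_{RL}=E_{LR}^T$. $I_{xL},I_{yL},I_{xR},I_{yR}$ are identity matrices of the indicated sizes. In the SBP setting $H_{x}$ is the SBP norm, $D_2=H_x^{-1}(-M+BS)$ is the second-derivative SBP operator with $S$ approximating the first derivative at the boundary, $\tau$ is the interface penalty parameter, and $I_{F2C},I_{C2F}$ are interface interpolation operators between the coarse (left) and fine (right) interface grids; hypothesis (ii) is the so-called borrowing property of $M$. *)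

theory Defs
  imports Complex_Main "Jordan_Normal_Form.Matrix"
begin

(* Kronecker product; row index i = i1 * dim_row B + i2 (first factor = outer index) *)
definition kron :: "real mat \<Rightarrow> real mat \<Rightarrow> real mat" where
  "kron A B = mat (dim_row A * dim_row B) (dim_col A * dim_col B)
     (\<lambda>(i,j). A $$ (i div dim_row B, j div dim_col B) * B $$ (i mod dim_row B, j mod dim_col B))"

definition symmetric_mat :: "real mat \<Rightarrow> bool" where
  "symmetric_mat A \<longleftrightarrow> A\<^sup>T = A"

definition psd_mat :: "nat \<Rightarrow> real mat \<Rightarrow> bool" where
  "psd_mat n A \<longleftrightarrow> A \<in> carrier_mat n n \<and> (\<forall>x \<in> carrier_vec n. x \<bullet> (A *\<^sub>v x) \<ge> 0)"

definition pd_mat :: "nat \<Rightarrow> real mat \<Rightarrow> bool" where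
  "pd_mat n A \<longleftrightarrow> A \<in> carrier_mat n n \<and> (\<forall>x \<in> carrier_vec n. x \<noteq> 0\<^sub>v n \<longrightarrow> x \<bullet> (A *\<^sub>v x) > 0)"

(* single-entry matrices (0-based indices): paper's E_0L (entry (n,n)), E_0R (entry (1,1)), E_LR (entry (nL,1)) *)
definition E0L :: "nat \<Rightarrow> real mat" where
  "E0L n = mat n n (\<lambda>(i,j). if i = n - 1 \<and> j = n - 1 then 1 else 0)"

definition E0R :: "nat \<Rightarrow> real mat" where
  "E0R n = mat n n (\<lambda>(i,j). if i = 0 \<and> j = 0 then 1 else 0)"

definition ELR :: "nat \<Rightarrow> nat \<Rightarrow> real mat" where
  "ELR nL nR = mat nL nR (\<lambda>(i,j). if i = nL - 1 \<and> j = 0 then 1 else 0)"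

definition ERL :: "nat \<Rightarrow> nat \<Rightarrow> real mat" where
  "ERL nL nR = (ELR nL nR)\<^sup>T"

end

theory Submission
  imports Defs
begin


lemma sum_shift_aux: "sum f {k..<k+m} = (\<Sum>j<m. f (k+j::nat) :: real)"
  by (induction m) (simp_all add: add.commute)

lemma sum_split_mult:
  "(\<Sum>r<n*m. f r) = (\<Sum>i<n. \<Sum>j<m. f (i*m+j :: nat) :: real)"
proof -
  have "(\<Sum>r<n*m. f r) = (\<Sum>i<n. sum f {i*m..<i*m+m})"
    by (simp add: sum.nat_group)
  also have "\<dots> = (\<Sum>i<n. \<Sum>j<m. f (i*m+j))"
  proof (rule sum.cong[OF refl])
    fix i show "sum f {i*m..<i*m+m} = (\<Sum>j<m. f (i*m+j))"
      by (rule sum_shift_aux)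
  qed
  finally show ?thesis .
qed

lemma kron_dims[simp]:
  "dim_row (kron A B) = dim_row A * dim_row B"
  "dim_col (kron A B) = dim_col A * dim_col B"
  by (simp_all add: kron_def)

lemma kron_index:
  "i < dim_row A * dim_row B \<Longrightarrow> j < dim_col A * dim_col B \<Longrightarrow>
   kron A B $$ (i,j) = A $$ (i div dim_row B, j div dim_col B) * B $$ (i mod dim_row B, j mod dim_col B)"
  by (simp add: kron_def)

lemma divmod_aux: "j < (m::nat) \<Longrightarrow> (i*m+j) div m = i \<and> (i*m+j) mod m = j"
  by auto

lemma idx_bound: "i < (n::nat) \<Longrightarrow> j < m \<Longrightarrow> i*m+j < n*m"
proof -
  assume "i < n" "j < m"
  then have "(i+1)*m \<le> n*m" by (intro mult_le_mono1) simp
  then show ?thesis using \<open>j<m\<close> by simp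
qed

lemma kron_index2:
  "i < dim_row A \<Longrightarrow> j < dim_row B \<Longrightarrow> k < dim_col A \<Longrightarrow> l < dim_col B \<Longrightarrow>
   kron A B $$ (i*dim_row B + j, k * dim_col B + l) = A $$ (i,k) * B $$ (j,l)"
  by (simp add: kron_index idx_bound)

lemma div_mod_bounds: "i < a * (b::nat) \<Longrightarrow> i div b < a \<and> i mod b < b"
  by (metis less_mult_imp_div_less mod_less_divisor mult_0_right not_gr0 not_less0)

lemma kron_mult:
  assumes "dim_col A = dim_row C" "dim_col B = dim_row D"
  shows "kron A B * kron C D = kron (A*C) (B*D)"
proof (rule eq_matI)
  fix i j assume i: "i < dim_row (kron (A*C) (B*D))" and j: "j < dim_col (kron (A*C) (B*D))"
  define p where "p = dim_col A"
  define q where "q = dim_col B"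
  have i': "i < dim_row A * dim_row B" using i by simp
  have j': "j < dim_col C * dim_col D" using j by simp
  note ib = div_mod_bounds[OF i'] and jb = div_mod_bounds[OF j']
  have "(kron A B * kron C D) $$ (i,j) = (\<Sum>r<p*q. kron A B $$ (i,r) * kron C D $$ (r,j))"
    using i' j' assms by (auto simp: scalar_prod_def p_def q_def atLeast0LessThan intro!: sum.cong)
  also have "\<dots> = (\<Sum>k<p. \<Sum>l<q. kron A B $$ (i,k*q+l) * kron C D $$ (k*q+l,j))"
    by (rule sum_split_mult)
  also have "\<dots> = (\<Sum>k<p. \<Sum>l<q. (A $$ (i div dim_row B, k) * C $$ (k, j div dim_col D)) *
                 (B $$ (i mod dim_row B, l) * D $$ (l, j mod dim_col D)))"
    by (intro sum.cong refl) (use i' j' assms in \<open>simp add: kron_index idx_bound p_def q_def\<close>)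
  also have "\<dots> = (\<Sum>k<p. A $$ (i div dim_row B, k) * C $$ (k, j div dim_col D)) *
                  (\<Sum>l<q. B $$ (i mod dim_row B, l) * D $$ (l, j mod dim_col D))"
    by (simp add: sum_product)
  also have "\<dots> = kron (A*C) (B*D) $$ (i,j)"
    using i' j' ib jb assms by (simp add: kron_index scalar_prod_def p_def q_def atLeast0LessThan)
  finally show "(kron A B * kron C D) $$ (i,j) = kron (A*C) (B*D) $$ (i,j)" .
qed simp_all

lemma kron_transpose: "(kron A B)\<^sup>T = kron (A\<^sup>T) (B\<^sup>T)"
proof (rule eq_matI)
  fix i j assume i: "i < dim_row (kron (A\<^sup>T) (B\<^sup>T))" and j: "j < dim_col (kron (A\<^sup>T) (B\<^sup>T))"
  have i': "i < dim_col A * dim_col B" and j': "j < dim_row A * dim_row B" using i j by auto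
  have "(kron A B)\<^sup>T $$ (i,j) = kron A B $$ (j,i)"
    using i' j' by (simp add: index_transpose_mat)
  also have "\<dots> = A $$ (j div dim_row B, i div dim_col B) * B $$ (j mod dim_row B, i mod dim_col B)"
    by (rule kron_index[OF j' i'])
  also have "\<dots> = A\<^sup>T $$ (i div dim_col B, j div dim_row B) * B\<^sup>T $$ (i mod dim_col B, j mod dim_row B)"
  proof -
    have a: "i div dim_col B < dim_col A" "i mod dim_col B < dim_col B" using div_mod_bounds[OF i'] by auto
    have b: "j div dim_row B < dim_row A" "j mod dim_row B < dim_row B" using div_mod_bounds[OF j'] by auto
    show ?thesis using a b by (simp only: index_transpose_mat)
  qed
  also have "\<dots> = kron (A\<^sup>T) (B\<^sup>T) $$ (i,j)"
    using kron_index[of i "A\<^sup>T" "B\<^sup>T" j] i' j' by (simp only: index_transpose_mat)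
  finally show "(kron A B)\<^sup>T $$ (i,j) = kron (A\<^sup>T) (B\<^sup>T) $$ (i,j)" .
next
  show "dim_row (kron A B)\<^sup>T = dim_row (kron A\<^sup>T B\<^sup>T)" by (simp only: index_transpose_mat kron_dims)
next
  show "dim_col (kron A B)\<^sup>T = dim_col (kron A\<^sup>T B\<^sup>T)" by (simp only: index_transpose_mat kron_dims)
qed

lemma kron_mult_vec:
  assumes "dim_col A = dim_row C" "dim_col B = dim_row D" "dim_vec z = dim_col C * dim_col D"
  shows "kron A B *\<^sub>v (kron C D *\<^sub>v z) = kron (A*C) (B*D) *\<^sub>v z"
proof -
  have c1: "kron A B \<in> carrier_mat (dim_row A * dim_row B) (dim_col A * dim_col B)"
    by (rule carrier_matI) simp_all
  have c2: "kron C D \<in> carrier_mat (dim_col A * dim_col B) (dim_col C * dim_col D)"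
    using assms by (intro carrier_matI) simp_all
  have c3: "z \<in> carrier_vec (dim_col C * dim_col D)" using assms by (intro carrier_vecI) simp
  have "kron A B *\<^sub>v (kron C D *\<^sub>v z) = (kron A B * kron C D) *\<^sub>v z"
    using assoc_mult_mat_vec[OF c1 c2 c3] by simp
  then show ?thesis using assms by (simp add: kron_mult)
qed

lemma bf_kron:
  assumes "dim_vec x = dim_row X * dim_row Y" "dim_vec z = dim_col X * dim_col Y"
  shows "x \<bullet> (kron X Y *\<^sub>v z) = (\<Sum>i<dim_row X. \<Sum>k<dim_col X.
     X $$ (i,k) * (\<Sum>j<dim_row Y. \<Sum>l<dim_col Y. x $ (i*dim_row Y+j) * Y $$ (j,l) * z $ (k*dim_col Y+l)))"
proof -
  have "x \<bullet> (kron X Y *\<^sub>v z) = (\<Sum>r<dim_row X*dim_row Y. x $ r * (\<Sum>s<dim_col X*dim_col Y. kron X Y $$ (r,s) * z $ s))"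
    using assms by (simp add: scalar_prod_def atLeast0LessThan mult_mat_vec_def row_def)
  also have "\<dots> = (\<Sum>i<dim_row X. \<Sum>j<dim_row Y. x $ (i*dim_row Y+j) *
        (\<Sum>k<dim_col X. \<Sum>l<dim_col Y. kron X Y $$ (i*dim_row Y+j,k*dim_col Y+l) * z $ (k*dim_col Y+l)))"
    by (simp add: sum_split_mult)
  also have "\<dots> = (\<Sum>i<dim_row X. \<Sum>j<dim_row Y.
        (\<Sum>k<dim_col X. \<Sum>l<dim_col Y. X $$ (i,k) * (x $ (i*dim_row Y+j) * Y $$ (j,l) * z $ (k*dim_col Y+l))))"
    by (intro sum.cong refl) (simp add: kron_index2 sum_distrib_left mult_ac)
  also have "\<dots> = (\<Sum>i<dim_row X. \<Sum>k<dim_col X. \<Sum>j<dim_row Y.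
        (\<Sum>l<dim_col Y. X $$ (i,k) * (x $ (i*dim_row Y+j) * Y $$ (j,l) * z $ (k*dim_col Y+l))))"
    by (rule sum.cong[OF refl], rule sum.swap)
  also have "\<dots> = (\<Sum>i<dim_row X. \<Sum>k<dim_col X.
     X $$ (i,k) * (\<Sum>j<dim_row Y. \<Sum>l<dim_col Y. x $ (i*dim_row Y+j) * Y $$ (j,l) * z $ (k*dim_col Y+l)))"
    by (simp add: sum_distrib_left)
  finally show ?thesis .
qed

lemma swap4:
  "(\<Sum>i\<in>A. \<Sum>k\<in>B. \<Sum>j\<in>C. \<Sum>l\<in>D. f i k j l) = (\<Sum>j\<in>C. \<Sum>l\<in>D. \<Sum>i\<in>A. \<Sum>k\<in>B. (f i k j l::real))"
proof -
  have "(\<Sum>i\<in>A. \<Sum>k\<in>B. \<Sum>j\<in>C. \<Sum>l\<in>D. f i k j l) = (\<Sum>i\<in>A. \<Sum>j\<in>C. \<Sum>k\<in>B. \<Sum>l\<in>D. f i k j l)"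
    by (rule sum.cong[OF refl], rule sum.swap)
  also have "\<dots> = (\<Sum>j\<in>C. \<Sum>i\<in>A. \<Sum>k\<in>B. \<Sum>l\<in>D. f i k j l)"
    by (rule sum.swap)
  also have "\<dots> = (\<Sum>j\<in>C. \<Sum>i\<in>A. \<Sum>l\<in>D. \<Sum>k\<in>B. f i k j l)"
    by (rule sum.cong[OF refl], rule sum.cong[OF refl], rule sum.swap)
  also have "\<dots> = (\<Sum>j\<in>C. \<Sum>l\<in>D. \<Sum>i\<in>A. \<Sum>k\<in>B. f i k j l)"
    by (rule sum.cong[OF refl], rule sum.swap)
  finally show ?thesis .
qed

lemma bf_plain:
  assumes "dim_vec x = dim_row A" "dim_vec y = dim_col A"
  shows "x \<bullet> (A *\<^sub>v y) = (\<Sum>i<dim_row A. \<Sum>k<dim_col A. x $ i * A $$ (i,k) * y $ k)"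
  using assms by (simp add: scalar_prod_def atLeast0LessThan mult_mat_vec_def row_def sum_distrib_left mult_ac)

definition red :: "nat \<Rightarrow> nat \<Rightarrow> (nat \<Rightarrow> real) \<Rightarrow> real vec \<Rightarrow> real vec" where
  "red n m a x = vec m (\<lambda>j. \<Sum>i<n. a i * x $ (i*m+j))"

lemma red_dim[simp]: "dim_vec (red n m a x) = m" by (simp add: red_def)

lemma bf_rank1:
  assumes "dim_vec x = dim_row X * dim_row Y" "dim_vec z = dim_col X * dim_col Y"
    and r1: "\<And>i k. i < dim_row X \<Longrightarrow> k < dim_col X \<Longrightarrow> X $$ (i,k) = a i * b k"
  shows "x \<bullet> (kron X Y *\<^sub>v z) = red (dim_row X) (dim_row Y) a x \<bullet> (Y *\<^sub>v red (dim_col X) (dim_col Y) b z)"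
proof -
  have "x \<bullet> (kron X Y *\<^sub>v z) = (\<Sum>i<dim_row X. \<Sum>k<dim_col X. (a i * b k) * (\<Sum>j<dim_row Y. \<Sum>l<dim_col Y.
      x $ (i*dim_row Y+j) * Y $$ (j,l) * z $ (k*dim_col Y+l)))"
    unfolding bf_kron[OF assms(1,2)] by (intro sum.cong refl) (simp add: r1)
  also have "\<dots> = (\<Sum>i<dim_row X. \<Sum>k<dim_col X. \<Sum>j<dim_row Y. \<Sum>l<dim_col Y.
      a i * x $ (i*dim_row Y+j) * Y $$ (j,l) * (b k * z $ (k*dim_col Y+l)))"
    by (simp add: sum_distrib_left mult_ac)
  also have "\<dots> = (\<Sum>j<dim_row Y. \<Sum>l<dim_col Y. \<Sum>i<dim_row X. \<Sum>k<dim_col X.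
      a i * x $ (i*dim_row Y+j) * Y $$ (j,l) * (b k * z $ (k*dim_col Y+l)))"
    by (rule swap4)
  also have "\<dots> = red (dim_row X) (dim_row Y) a x \<bullet> (Y *\<^sub>v red (dim_col X) (dim_col Y) b z)"
    by (simp add: bf_plain red_def sum_distrib_left sum_distrib_right mult_ac)
  finally show ?thesis .
qed

lemma psd_kron_diag:
  assumes A: "psd_mat n A" and B: "diagonal_mat B" "B \<in> carrier_mat m m" "\<And>j. j < m \<Longrightarrow> B $$ (j,j) \<ge> 0"
    and x: "dim_vec x = n * m"
  shows "x \<bullet> (kron A B *\<^sub>v x) \<ge> 0"
proof -
  have Ac: "A \<in> carrier_mat n n" using A by (simp add: psd_mat_def)
  define c where "c j = vec n (\<lambda>i. x $ (i*m+j))" for j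
  have "x \<bullet> (kron A B *\<^sub>v x) = (\<Sum>i<n. \<Sum>k<n. A $$ (i,k) * (\<Sum>j<m. x $ (i*m+j) * B $$ (j,j) * x $ (k*m+j)))"
  proof -
    have "x \<bullet> (kron A B *\<^sub>v x) = (\<Sum>i<n. \<Sum>k<n. A $$ (i,k) * (\<Sum>j<m. \<Sum>l<m. x $ (i*m+j) * B $$ (j,l) * x $ (k*m+l)))"
      using Ac B x by (simp add: bf_kron)
    also have "\<dots> = (\<Sum>i<n. \<Sum>k<n. A $$ (i,k) * (\<Sum>j<m. x $ (i*m+j) * B $$ (j,j) * x $ (k*m+j)))"
    proof (intro sum.cong refl arg_cong2[where f="(*)"])
      fix i k j assume j: "j \<in> {..<m}"
      have "(\<Sum>l<m. x $ (i*m+j) * B $$ (j,l) * x $ (k*m+l)) = (\<Sum>l\<in>{j}. x $ (i*m+j) * B $$ (j,l) * x $ (k*m+l))"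
        by (rule sum.mono_neutral_right) (use j B in \<open>auto simp: diagonal_mat_def\<close>)
      then show "(\<Sum>l<m. x $ (i*m+j) * B $$ (j,l) * x $ (k*m+l)) = x $ (i*m+j) * B $$ (j,j) * x $ (k*m+j)" by simp
    qed
    finally show ?thesis .
  qed
  also have "\<dots> = (\<Sum>j<m. B $$ (j,j) * (c j \<bullet> (A *\<^sub>v c j)))"
  proof -
    have "(\<Sum>i<n. \<Sum>k<n. A $$ (i,k) * (\<Sum>j<m. x $ (i*m+j) * B $$ (j,j) * x $ (k*m+j)))
        = (\<Sum>i<n. \<Sum>k<n. \<Sum>j<m. B $$ (j,j) * (x $ (i*m+j) * A $$ (i,k) * x $ (k*m+j)))"
      by (simp add: sum_distrib_left mult_ac)
    also have "\<dots> = (\<Sum>i<n. \<Sum>j<m. \<Sum>k<n. B $$ (j,j) * (x $ (i*m+j) * A $$ (i,k) * x $ (k*m+j)))"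
      by (rule sum.cong[OF refl], rule sum.swap)
    also have "\<dots> = (\<Sum>j<m. \<Sum>i<n. \<Sum>k<n. B $$ (j,j) * (x $ (i*m+j) * A $$ (i,k) * x $ (k*m+j)))"
      by (rule sum.swap)
    also have "\<dots> = (\<Sum>j<m. B $$ (j,j) * (c j \<bullet> (A *\<^sub>v c j)))"
      using Ac by (simp add: bf_plain c_def sum_distrib_left)
    finally show ?thesis .
  qed
  also have "\<dots> \<ge> 0"
  proof (rule sum_nonneg)
    fix j assume "j \<in> {..<m}"
    then have "B $$ (j,j) \<ge> 0" using B by simp
    moreover have "c j \<bullet> (A *\<^sub>v c j) \<ge> 0" using A by (simp add: psd_mat_def c_def)
    ultimately show "B $$ (j,j) * (c j \<bullet> (A *\<^sub>v c j)) \<ge> 0" by simp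
  qed
  finally show ?thesis .
qed



lemma bf_swap:
  fixes A :: "real mat"
  assumes "A \<in> carrier_mat n m" "x \<in> carrier_vec n" "y \<in> carrier_vec m"
  shows "x \<bullet> (A *\<^sub>v y) = y \<bullet> (A\<^sup>T *\<^sub>v x)"
proof -
  have "y \<bullet> (A\<^sup>T *\<^sub>v x) = (A\<^sup>T *\<^sub>v x) \<bullet> y"
  proof -
    have "y \<in> carrier_vec m" "A\<^sup>T *\<^sub>v x \<in> carrier_vec m" using assms by auto
    then show ?thesis by (rule comm_scalar_prod)
  qed
  also have "\<dots> = x \<bullet> (A *\<^sub>v y)" by (rule transpose_vec_mult_scalar[OF assms(1) assms(3) assms(2)])
  finally show ?thesis by simp
qed

lemma diag_sym: "diagonal_mat H \<Longrightarrow> H \<in> carrier_mat n n \<Longrightarrow> H\<^sup>T = H"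
  by (rule eq_matI) (auto simp: diagonal_mat_def, metis)

lemma small_ineq:
  fixes p d :: "real vec" and q e :: "real vec"
  assumes pd: "p \<in> carrier_vec mL" "d \<in> carrier_vec mL" and qe: "q \<in> carrier_vec mR" "e \<in> carrier_vec mR"
    and HL: "HL \<in> carrier_mat mL mL" "HL\<^sup>T = HL" "psd_mat mL HL"
    and HR: "HR \<in> carrier_mat mR mR" "HR\<^sup>T = HR" "psd_mat mR HR"
    and FC: "F \<in> carrier_mat mL mR" "C \<in> carrier_mat mR mL" "HR * C = (HL * F)\<^sup>T"
        "psd_mat mL (HL * (1\<^sub>m mL - F * C))" "psd_mat mR (HR * (1\<^sub>m mR - C * F))"
    and a: "aL > 0" "aR > 0" and tau: "\<tau> \<ge> 1/(2*aL)" "\<tau> \<ge> 1/(2*aR)"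
  shows "aL*(d \<bullet> (HL *\<^sub>v d)) - p \<bullet> (HL *\<^sub>v d) + \<tau>*(p \<bullet> (HL *\<^sub>v p))
       + aR*(e \<bullet> (HR *\<^sub>v e)) + q \<bullet> (HR *\<^sub>v e) + \<tau>*(q \<bullet> (HR *\<^sub>v q))
       + d \<bullet> ((HL*F) *\<^sub>v q) - e \<bullet> ((HR*C) *\<^sub>v p) - 2*\<tau>*(p \<bullet> ((HL*F) *\<^sub>v q)) \<ge> 0"
proof -
  define wL where "wL = p - F *\<^sub>v q"
  define wR where "wR = q - C *\<^sub>v p"
  have Fq: "F *\<^sub>v q \<in> carrier_vec mL" and Cp: "C *\<^sub>v p \<in> carrier_vec mR" using FC pd qe by auto
  have wLc: "wL \<in> carrier_vec mL" and wRc: "wR \<in> carrier_vec mR" using Fq Cp pd qe by (auto simp: wL_def wR_def)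
  have HLFc: "HL * F \<in> carrier_mat mL mR" using mult_carrier_mat[OF HL(1) FC(1)] .
  have HRCc: "HR * C \<in> carrier_mat mR mL" using mult_carrier_mat[OF HR(1) FC(2)] .
  have GT: "(HL*F)\<^sup>T = HR * C" using FC by simp
  have GT2: "(HR*C)\<^sup>T = HL * F" using FC by (simp add: transpose_transpose)
  have symL: "x \<bullet> (HL *\<^sub>v y) = y \<bullet> (HL *\<^sub>v x)" if "x \<in> carrier_vec mL" "y \<in> carrier_vec mL" for x y
    using bf_swap[OF HL(1) that] HL by simp
  have symR: "x \<bullet> (HR *\<^sub>v y) = y \<bullet> (HR *\<^sub>v x)" if "x \<in> carrier_vec mR" "y \<in> carrier_vec mR" for x y
    using bf_swap[OF HR(1) that] HR by simp
  have HLF: "HL *\<^sub>v (F *\<^sub>v x) = (HL*F) *\<^sub>v x" if "x \<in> carrier_vec mR" for x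
    using assoc_mult_mat_vec[OF HL(1) FC(1) that] by simp
  have HRC: "HR *\<^sub>v (C *\<^sub>v x) = (HR*C) *\<^sub>v x" if "x \<in> carrier_vec mL" for x
    using assoc_mult_mat_vec[OF HR(1) FC(2) that] by simp
  have HwL: "HL *\<^sub>v wL = HL *\<^sub>v p - HL *\<^sub>v (F *\<^sub>v q)"
    unfolding wL_def by (rule mult_minus_distrib_mat_vec[OF HL(1) pd(1) Fq])
  have HwR: "HR *\<^sub>v wR = HR *\<^sub>v q - HR *\<^sub>v (C *\<^sub>v p)"
    unfolding wR_def by (rule mult_minus_distrib_mat_vec[OF HR(1) qe(1) Cp])
  have HpL: "HL *\<^sub>v p \<in> carrier_vec mL" "HL *\<^sub>v (F *\<^sub>v q) \<in> carrier_vec mL" using HL pd Fq by auto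
  have HqR: "HR *\<^sub>v q \<in> carrier_vec mR" "HR *\<^sub>v (C *\<^sub>v p) \<in> carrier_vec mR" using HR qe Cp by auto
  have B: "d \<bullet> (HL *\<^sub>v wL) = p \<bullet> (HL *\<^sub>v d) - d \<bullet> ((HL*F) *\<^sub>v q)"
  proof -
    have "d \<bullet> (HL *\<^sub>v wL) = d \<bullet> (HL *\<^sub>v p) - d \<bullet> (HL *\<^sub>v (F *\<^sub>v q))"
      unfolding HwL by (rule scalar_prod_minus_distrib[OF pd(2) HpL])
    then show ?thesis by (simp only: symL[OF pd(2) pd(1)] HLF[OF qe(1)])
  qed
  have B': "e \<bullet> (HR *\<^sub>v wR) = q \<bullet> (HR *\<^sub>v e) - e \<bullet> ((HR*C) *\<^sub>v p)"
  proof -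
    have "e \<bullet> (HR *\<^sub>v wR) = e \<bullet> (HR *\<^sub>v q) - e \<bullet> (HR *\<^sub>v (C *\<^sub>v p))"
      unfolding HwR by (rule scalar_prod_minus_distrib[OF qe(2) HqR])
    then show ?thesis by (simp only: symR[OF qe(2) qe(1)] HRC[OF pd(1)])
  qed
  have cross: "q \<bullet> ((HR*C) *\<^sub>v p) = p \<bullet> ((HL*F) *\<^sub>v q)"
    using bf_swap[OF HRCc qe(1) pd(1)] unfolding GT2 .
  have FF: "(F *\<^sub>v q) \<bullet> (HL *\<^sub>v (F *\<^sub>v q)) = q \<bullet> ((HR*C*F) *\<^sub>v q)"
  proof -
    have "(F *\<^sub>v q) \<bullet> (HL *\<^sub>v (F *\<^sub>v q)) = (F *\<^sub>v q) \<bullet> ((HL*F) *\<^sub>v q)" using qe by (simp add: HLF)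
    also have "\<dots> = q \<bullet> ((HR*C) *\<^sub>v (F *\<^sub>v q))"
      using bf_swap[OF HLFc Fq qe(1)] unfolding GT .
    also have "\<dots> = q \<bullet> ((HR*C*F) *\<^sub>v q)"
      by (simp only: assoc_mult_mat_vec[OF HRCc FC(1) qe(1)])
    finally show ?thesis .
  qed
  have CC: "(C *\<^sub>v p) \<bullet> (HR *\<^sub>v (C *\<^sub>v p)) = p \<bullet> ((HL*F*C) *\<^sub>v p)"
  proof -
    have "(C *\<^sub>v p) \<bullet> (HR *\<^sub>v (C *\<^sub>v p)) = (C *\<^sub>v p) \<bullet> ((HR*C) *\<^sub>v p)" using pd by (simp add: HRC)
    also have "\<dots> = p \<bullet> ((HL*F) *\<^sub>v (C *\<^sub>v p))"
      using bf_swap[OF HRCc Cp pd(1)] unfolding GT2 .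
    also have "\<dots> = p \<bullet> ((HL*F*C) *\<^sub>v p)"
      by (simp only: assoc_mult_mat_vec[OF HLFc FC(2) pd(1)])
    finally show ?thesis .
  qed
  have W: "wL \<bullet> (HL *\<^sub>v wL) = p \<bullet> (HL *\<^sub>v p) - 2 * (p \<bullet> ((HL*F) *\<^sub>v q)) + q \<bullet> ((HR*C*F) *\<^sub>v q)"
  proof -
    have "wL \<bullet> (HL *\<^sub>v wL) = p \<bullet> (HL *\<^sub>v p) - p \<bullet> (HL *\<^sub>v (F *\<^sub>v q)) - ((F *\<^sub>v q) \<bullet> (HL *\<^sub>v p)
          - (F *\<^sub>v q) \<bullet> (HL *\<^sub>v (F *\<^sub>v q)))"
      unfolding HwL unfolding wL_def
      by (simp only: minus_scalar_prod_distrib[OF pd(1) Fq, of _] scalar_prod_minus_distrib[OF pd(1) HpL]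
          scalar_prod_minus_distrib[OF Fq HpL] minus_scalar_prod_distrib[OF pd(1) Fq] carrier_vecI
          minus_carrier_vec HpL)
    also have "(F *\<^sub>v q) \<bullet> (HL *\<^sub>v p) = p \<bullet> (HL *\<^sub>v (F *\<^sub>v q))" by (rule symL[OF Fq pd(1)])
    also have "p \<bullet> (HL *\<^sub>v (F *\<^sub>v q)) = p \<bullet> ((HL*F) *\<^sub>v q)" by (simp only: HLF[OF qe(1)])
    also note FF
    finally show ?thesis by simp
  qed
  have W': "wR \<bullet> (HR *\<^sub>v wR) = q \<bullet> (HR *\<^sub>v q) - 2 * (p \<bullet> ((HL*F) *\<^sub>v q)) + p \<bullet> ((HL*F*C) *\<^sub>v p)"
  proof -
    have "wR \<bullet> (HR *\<^sub>v wR) = q \<bullet> (HR *\<^sub>v q) - q \<bullet> (HR *\<^sub>v (C *\<^sub>v p)) - ((C *\<^sub>v p) \<bullet> (HR *\<^sub>v q)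
          - (C *\<^sub>v p) \<bullet> (HR *\<^sub>v (C *\<^sub>v p)))"
      unfolding HwR unfolding wR_def
      by (simp only: scalar_prod_minus_distrib[OF qe(1) HqR]
          scalar_prod_minus_distrib[OF Cp HqR] minus_scalar_prod_distrib[OF qe(1) Cp] carrier_vecI
          minus_carrier_vec HqR)
    also have "(C *\<^sub>v p) \<bullet> (HR *\<^sub>v q) = q \<bullet> (HR *\<^sub>v (C *\<^sub>v p))" by (rule symR[OF Cp qe(1)])
    also have "q \<bullet> (HR *\<^sub>v (C *\<^sub>v p)) = q \<bullet> ((HR*C) *\<^sub>v p)" by (simp only: HRC[OF pd(1)])
    also note cross
    also note CC
    finally show ?thesis by simp
  qed
  have PL: "p \<bullet> (HL *\<^sub>v p) - p \<bullet> ((HL*F*C) *\<^sub>v p) \<ge> 0"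
  proof -
    have 1: "p \<bullet> ((HL * (1\<^sub>m mL - F * C)) *\<^sub>v p) \<ge> 0" using FC pd(1) by (simp add: psd_mat_def)
    have 2: "HL * (1\<^sub>m mL - F * C) = HL - HL*F*C"
    proof -
      have FCc: "F * C \<in> carrier_mat mL mL" using mult_carrier_mat[OF FC(1) FC(2)] .
      have "HL * (1\<^sub>m mL - F * C) = HL * 1\<^sub>m mL - HL * (F * C)"
        by (rule mult_minus_distrib_mat[OF HL(1) one_carrier_mat FCc])
      also have "\<dots> = HL - HL*F*C"
        using HL(1) by (simp only: assoc_mult_mat[OF HL(1) FC(1) FC(2)] right_mult_one_mat)
      finally show ?thesis .
    qed
    have c: "HL \<in> carrier_mat mL mL" "HL*F*C \<in> carrier_mat mL mL" using HL FC by auto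
    have 3: "(HL - HL*F*C) *\<^sub>v p = HL *\<^sub>v p - (HL*F*C) *\<^sub>v p"
      by (rule minus_mult_distrib_mat_vec[OF c pd(1)])
    have c2: "HL *\<^sub>v p \<in> carrier_vec mL" "(HL*F*C) *\<^sub>v p \<in> carrier_vec mL" using c pd(1) by auto
    have "p \<bullet> ((HL * (1\<^sub>m mL - F * C)) *\<^sub>v p) = p \<bullet> (HL *\<^sub>v p) - p \<bullet> ((HL*F*C) *\<^sub>v p)"
      unfolding 2 3 by (rule scalar_prod_minus_distrib[OF pd(1) c2])
    then show ?thesis using 1 by linarith
  qed
  have PR: "q \<bullet> (HR *\<^sub>v q) - q \<bullet> ((HR*C*F) *\<^sub>v q) \<ge> 0"
  proof -
    have 1: "q \<bullet> ((HR * (1\<^sub>m mR - C * F)) *\<^sub>v q) \<ge> 0" using FC qe(1) by (simp add: psd_mat_def)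
    have 2: "HR * (1\<^sub>m mR - C * F) = HR - HR*C*F"
    proof -
      have FCc: "C * F \<in> carrier_mat mR mR" using mult_carrier_mat[OF FC(2) FC(1)] .
      have "HR * (1\<^sub>m mR - C * F) = HR * 1\<^sub>m mR - HR * (C * F)"
        by (rule mult_minus_distrib_mat[OF HR(1) one_carrier_mat FCc])
      also have "\<dots> = HR - HR*C*F"
        using HR(1) by (simp only: assoc_mult_mat[OF HR(1) FC(2) FC(1)] right_mult_one_mat)
      finally show ?thesis .
    qed
    have c: "HR \<in> carrier_mat mR mR" "HR*C*F \<in> carrier_mat mR mR" using HR FC by auto
    have 3: "(HR - HR*C*F) *\<^sub>v q = HR *\<^sub>v q - (HR*C*F) *\<^sub>v q"
      by (rule minus_mult_distrib_mat_vec[OF c qe(1)])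
    have c2: "HR *\<^sub>v q \<in> carrier_vec mR" "(HR*C*F) *\<^sub>v q \<in> carrier_vec mR" using c qe(1) by auto
    have "q \<bullet> ((HR * (1\<^sub>m mR - C * F)) *\<^sub>v q) = q \<bullet> (HR *\<^sub>v q) - q \<bullet> ((HR*C*F) *\<^sub>v q)"
      unfolding 2 3 by (rule scalar_prod_minus_distrib[OF qe(1) c2])
    then show ?thesis using 1 by linarith
  qed
  have WLnn: "wL \<bullet> (HL *\<^sub>v wL) \<ge> 0" using HL wLc by (simp add: psd_mat_def)
  have WRnn: "wR \<bullet> (HR *\<^sub>v wR) \<ge> 0" using HR wRc by (simp add: psd_mat_def)
  (* completing the square *)
  have sq: "aL*(x \<bullet> (H *\<^sub>v x)) - s*(x \<bullet> (H *\<^sub>v w)) + (\<tau>/2)*(w \<bullet> (H *\<^sub>v w)) \<ge> 0"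
    if H: "H \<in> carrier_mat m m" "H\<^sup>T = H" "psd_mat m H" and xw: "x \<in> carrier_vec m" "w \<in> carrier_vec m"
       and s: "s = 1 \<or> s = -1" and aa: "aL > 0" "\<tau> \<ge> 1/(2*aL)" for H m x w s aL
  proof -
    define c where "c = s / (2*aL)"
    have sym: "w \<bullet> (H *\<^sub>v x) = x \<bullet> (H *\<^sub>v w)" using bf_swap[OF H(1) xw(2,1)] H by simp
    have "(x - c \<cdot>\<^sub>v w) \<bullet> (H *\<^sub>v (x - c \<cdot>\<^sub>v w)) \<ge> 0" using H xw by (simp add: psd_mat_def)
    moreover have "(x - c \<cdot>\<^sub>v w) \<bullet> (H *\<^sub>v (x - c \<cdot>\<^sub>v w)) =
        x \<bullet> (H *\<^sub>v x) - 2*c*(x \<bullet> (H *\<^sub>v w)) + c*c*(w \<bullet> (H *\<^sub>v w))"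
      using H xw sym by (simp add: mult_minus_distrib_mat_vec[of _ m m] scalar_prod_minus_distrib[of _ m]
          minus_scalar_prod_distrib[of _ m] mult_mat_vec[of _ m m] algebra_simps)
    ultimately have 1: "x \<bullet> (H *\<^sub>v x) - 2*c*(x \<bullet> (H *\<^sub>v w)) + c*c*(w \<bullet> (H *\<^sub>v w)) \<ge> 0" by simp
    have W0: "w \<bullet> (H *\<^sub>v w) \<ge> 0" using H xw by (simp add: psd_mat_def)
    have 0: "aL * (x \<bullet> (H *\<^sub>v x) - 2*c*(x \<bullet> (H *\<^sub>v w)) + c*c*(w \<bullet> (H *\<^sub>v w))) \<ge> 0"
      using 1 aa by simp
    have e1: "aL * (x \<bullet> (H *\<^sub>v x) - 2*c*(x \<bullet> (H *\<^sub>v w)) + c*c*(w \<bullet> (H *\<^sub>v w)))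
       = aL*(x \<bullet> (H *\<^sub>v x)) - (aL*(2*c))*(x \<bullet> (H *\<^sub>v w)) + (aL*(c*c))*(w \<bullet> (H *\<^sub>v w))"
      by (simp add: algebra_simps)
    have e2: "aL * (2*c) = s" "aL*(c*c) = 1/(4*aL)" using aa s by (auto simp: c_def field_simps)
    have 2: "aL*(x \<bullet> (H *\<^sub>v x)) - s*(x \<bullet> (H *\<^sub>v w)) + (1/(4*aL))*(w \<bullet> (H *\<^sub>v w)) \<ge> 0"
      using 0 unfolding e1 e2 .
    have "(1/(4*aL)) \<le> \<tau>/2" using aa by (simp add: field_simps)
    then have "(1/(4*aL))*(w \<bullet> (H *\<^sub>v w)) \<le> (\<tau>/2)*(w \<bullet> (H *\<^sub>v w))" using W0 by (rule mult_right_mono)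
    then show ?thesis using 2 by linarith
  qed
  have sL: "aL*(d \<bullet> (HL *\<^sub>v d)) - 1*(d \<bullet> (HL *\<^sub>v wL)) + (\<tau>/2)*(wL \<bullet> (HL *\<^sub>v wL)) \<ge> 0"
    by (rule sq[OF HL pd(2) wLc]) (use a tau in auto)
  have sR: "aR*(e \<bullet> (HR *\<^sub>v e)) - (-1)*(e \<bullet> (HR *\<^sub>v wR)) + (\<tau>/2)*(wR \<bullet> (HR *\<^sub>v wR)) \<ge> 0"
    by (rule sq[OF HR qe(2) wRc]) (use a tau in auto)
  have tau0: "\<tau> \<ge> 0" using tau a by (smt (verit) divide_pos_pos)
  have "(\<tau>/2) * (p \<bullet> (HL *\<^sub>v p) - p \<bullet> ((HL*F*C) *\<^sub>v p)) \<ge> 0" using tau0 PL by simp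
  moreover have "(\<tau>/2) * (q \<bullet> (HR *\<^sub>v q) - q \<bullet> ((HR*C*F) *\<^sub>v q)) \<ge> 0" using tau0 PR by simp
  ultimately show ?thesis using sL sR unfolding B B' W W' by (simp add: algebra_simps)
qed



lemma E0L_index: "i < n \<Longrightarrow> k < n \<Longrightarrow> E0L n $$ (i,k) = (if i = n-1 then 1 else 0) * (if k = n-1 then 1 else 0)"
  by (simp add: E0L_def)

lemma E0R_index: "i < n \<Longrightarrow> k < n \<Longrightarrow> E0R n $$ (i,k) = (if i = 0 then 1 else 0) * (if k = 0 then 1 else 0)"
  by (simp add: E0R_def)

lemma ELR_index: "i < nL \<Longrightarrow> k < nR \<Longrightarrow> ELR nL nR $$ (i,k) = (if i = nL-1 then 1 else 0) * (if k = 0 then 1 else 0)"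
  by (simp add: ELR_def)

lemma E_dims[simp]:
  "dim_row (E0L n) = n" "dim_col (E0L n) = n" "dim_row (E0R n) = n" "dim_col (E0R n) = n"
  "dim_row (ELR nL nR) = nL" "dim_col (ELR nL nR) = nR" "dim_row (ERL nL nR) = nR" "dim_col (ERL nL nR) = nL"
  by (simp_all add: E0L_def E0R_def ELR_def ERL_def)

lemma sum_single: "r < (n::nat) \<Longrightarrow> (\<Sum>t<n. (if t = r then 1 else 0) * f t) = (f r :: real)"
proof -
  assume r: "r < n"
  have "(\<Sum>t<n. (if t = r then 1 else 0) * f t) = (\<Sum>t\<in>{r}. (if t = r then 1 else 0) * f t)"
    by (rule sum.mono_neutral_right) (use r in auto)
  then show ?thesis by simp
qed

lemma E0L_S_index:
  assumes "S \<in> carrier_mat n n'" "i < n" "k < n'"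
  shows "(E0L n * S) $$ (i,k) = (if i = n-1 then 1 else 0) * S $$ (n-1,k)"
proof -
  have "(E0L n * S) $$ (i,k) = (\<Sum>t<n. E0L n $$ (i,t) * S $$ (t,k))"
    using assms by (simp add: scalar_prod_def atLeast0LessThan)
  also have "\<dots> = (\<Sum>t<n. (if t = n-1 then 1 else 0) * ((if i = n-1 then 1 else 0) * S $$ (t,k)))"
    using assms by (intro sum.cong refl) (simp add: E0L_index)
  also have "\<dots> = (if i = n-1 then 1 else 0) * S $$ (n-1,k)"
    using assms by (subst sum_single) auto
  finally show ?thesis .
qed

lemma E0R_S_index:
  assumes "S \<in> carrier_mat n n'" "i < n" "k < n'"
  shows "(E0R n * S) $$ (i,k) = (if i = 0 then 1 else 0) * S $$ (0,k)"
proof -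
  have "(E0R n * S) $$ (i,k) = (\<Sum>t<n. E0R n $$ (i,t) * S $$ (t,k))"
    using assms by (simp add: scalar_prod_def atLeast0LessThan)
  also have "\<dots> = (\<Sum>t<n. (if t = 0 then 1 else 0) * ((if i = 0 then 1 else 0) * S $$ (t,k)))"
    using assms by (intro sum.cong refl) (simp add: E0R_index)
  also have "\<dots> = (if i = 0 then 1 else 0) * S $$ (0,k)"
    using assms by (subst sum_single) auto
  finally show ?thesis .
qed

lemma St_E0L_index:
  assumes "S \<in> carrier_mat n n'" "i < n'" "k < n"
  shows "(S\<^sup>T * E0L n) $$ (i,k) = S $$ (n-1,i) * (if k = n-1 then 1 else 0)"
proof -
  have "(S\<^sup>T * E0L n) $$ (i,k) = (\<Sum>t<n. S $$ (t,i) * E0L n $$ (t,k))"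
    using assms by (simp add: scalar_prod_def atLeast0LessThan)
  also have "\<dots> = (\<Sum>t<n. (if t = n-1 then 1 else 0) * (S $$ (t,i) * (if k = n-1 then 1 else 0)))"
    using assms by (intro sum.cong refl) (simp add: E0L_index)
  also have "\<dots> = S $$ (n-1,i) * (if k = n-1 then 1 else 0)"
    using assms by (subst sum_single) auto
  finally show ?thesis .
qed

lemma St_E0R_index:
  assumes "S \<in> carrier_mat n n'" "i < n'" "k < n" 
  shows "(S\<^sup>T * E0R n) $$ (i,k) = S $$ (0,i) * (if k = 0 then 1 else 0)"
proof -
  have "(S\<^sup>T * E0R n) $$ (i,k) = (\<Sum>t<n. S $$ (t,i) * E0R n $$ (t,k))"
    using assms by (simp add: scalar_prod_def atLeast0LessThan)
  also have "\<dots> = (\<Sum>t<n. (if t = 0 then 1 else 0) * (S $$ (t,i) * (if k = 0 then 1 else 0)))"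
    using assms by (intro sum.cong refl) (simp add: E0R_index)
  also have "\<dots> = S $$ (0,i) * (if k = 0 then 1 else 0)"
    using assms by (subst sum_single) auto
  finally show ?thesis .
qed

lemma St_ELR_index:
  assumes "S \<in> carrier_mat nL n'" "i < n'" "k < nR" "nL > 0"
  shows "(S\<^sup>T * ELR nL nR) $$ (i,k) = S $$ (nL-1,i) * (if k = 0 then 1 else 0)"
proof -
  have "(S\<^sup>T * ELR nL nR) $$ (i,k) = (\<Sum>t<nL. S $$ (t,i) * ELR nL nR $$ (t,k))"
    using assms by (simp add: scalar_prod_def atLeast0LessThan)
  also have "\<dots> = (\<Sum>t<nL. (if t = nL-1 then 1 else 0) * (S $$ (t,i) * (if k = 0 then 1 else 0)))"
    using assms by (intro sum.cong refl) (simp add: ELR_index)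
  also have "\<dots> = S $$ (nL-1,i) * (if k = 0 then 1 else 0)"
    using assms by (subst sum_single) auto
  finally show ?thesis .
qed

lemma St_ERL_index:
  assumes "S \<in> carrier_mat nR n'" "i < n'" "k < nL" "nR > 0"
  shows "(S\<^sup>T * ERL nL nR) $$ (i,k) = S $$ (0,i) * (if k = nL-1 then 1 else 0)"
proof -
  have "(S\<^sup>T * ERL nL nR) $$ (i,k) = (\<Sum>t<nR. S $$ (t,i) * ELR nL nR $$ (k,t))"
    using assms by (simp add: scalar_prod_def atLeast0LessThan ERL_def)
  also have "\<dots> = (\<Sum>t<nR. (if t = 0 then 1 else 0) * (S $$ (t,i) * (if k = nL-1 then 1 else 0)))"
    using assms by (intro sum.cong refl) (simp add: ELR_index)
  also have "\<dots> = S $$ (0,i) * (if k = nL-1 then 1 else 0)"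
    using assms by (subst sum_single) auto
  finally show ?thesis .
qed

lemma ERL_S_index:
  assumes "S \<in> carrier_mat nL n'" "i < nR" "k < n'" "nL > 0"
  shows "(ERL nL nR * S) $$ (i,k) = (if i = 0 then 1 else 0) * S $$ (nL-1,k)"
proof -
  have "(ERL nL nR * S) $$ (i,k) = (\<Sum>t<nL. ELR nL nR $$ (t,i) * S $$ (t,k))"
    using assms by (simp add: scalar_prod_def atLeast0LessThan ERL_def)
  also have "\<dots> = (\<Sum>t<nL. (if t = nL-1 then 1 else 0) * ((if i = 0 then 1 else 0) * S $$ (t,k)))"
    using assms by (intro sum.cong refl) (simp add: ELR_index)
  also have "\<dots> = (if i = 0 then 1 else 0) * S $$ (nL-1,k)"
    using assms by (subst sum_single) auto
  finally show ?thesis .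
qed

lemma ELR_S_index:
  assumes "S \<in> carrier_mat nR n'" "i < nL" "k < n'" "nR > 0"
  shows "(ELR nL nR * S) $$ (i,k) = (if i = nL-1 then 1 else 0) * S $$ (0,k)"
proof -
  have "(ELR nL nR * S) $$ (i,k) = (\<Sum>t<nR. ELR nL nR $$ (i,t) * S $$ (t,k))"
    using assms by (simp add: scalar_prod_def atLeast0LessThan)
  also have "\<dots> = (\<Sum>t<nR. (if t = 0 then 1 else 0) * ((if i = nL-1 then 1 else 0) * S $$ (t,k)))"
    using assms by (intro sum.cong refl) (simp add: ELR_index)
  also have "\<dots> = (if i = nL-1 then 1 else 0) * S $$ (0,k)"
    using assms by (subst sum_single) auto
  finally show ?thesis .
qed

lemma ERL_index: "i < nR \<Longrightarrow> k < nL \<Longrightarrow> ERL nL nR $$ (i,k) = (if i = 0 then 1 else 0) * (if k = nL-1 then 1 else 0)"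
  by (simp add: ERL_def ELR_index)

lemma MtS_index:
  assumes "S \<in> carrier_mat n n'" "i < n'" "k < n" "n > 0" "k < n'"
  shows "((E0L n * S)\<^sup>T * (E0L n * S)) $$ (i,k) = S $$ (n-1,i) * S $$ (n-1,k)"
proof -
  have "((E0L n * S)\<^sup>T * (E0L n * S)) $$ (i,k) = (\<Sum>t<n. (E0L n * S) $$ (t,i) * (E0L n * S) $$ (t,k))"
    using assms by (simp add: scalar_prod_def atLeast0LessThan)
  also have "\<dots> = (\<Sum>t<n. (if t = n-1 then 1 else 0) * (S $$ (n-1,i) * S $$ (n-1,k)))"
    using assms by (intro sum.cong refl) (auto simp del: index_mult_mat simp add: E0L_S_index)
  also have "\<dots> = S $$ (n-1,i) * S $$ (n-1,k)"
    using assms by (subst sum_single) auto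
  finally show ?thesis .
qed

lemma DL:
  fixes x y :: "real \<Rightarrow> real vec"
  assumes x: "\<And>s. x s \<in> carrier_vec n" "x' \<in> carrier_vec n" and y: "\<And>s. y s \<in> carrier_vec m" "y' \<in> carrier_vec m"
    and K: "K \<in> carrier_mat n m"
    and dx: "\<And>i. i < n \<Longrightarrow> ((\<lambda>s. x s $ i) has_real_derivative (x' $ i)) (at t)"
    and dy: "\<And>i. i < m \<Longrightarrow> ((\<lambda>s. y s $ i) has_real_derivative (y' $ i)) (at t)"
  shows "((\<lambda>s. x s \<bullet> (K *\<^sub>v y s)) has_real_derivative (x' \<bullet> (K *\<^sub>v y t) + x t \<bullet> (K *\<^sub>v y'))) (at t)"
proof -
  have eq: "(\<lambda>s. x s \<bullet> (K *\<^sub>v y s)) = (\<lambda>s. \<Sum>i<n. \<Sum>k<m. x s $ i * K $$ (i,k) * y s $ k)"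
    using x y K by (intro ext) (simp add: bf_plain)
  have "((\<lambda>s. \<Sum>i<n. \<Sum>k<m. x s $ i * K $$ (i,k) * y s $ k) has_real_derivative
      (\<Sum>i<n. \<Sum>k<m. x' $ i * K $$ (i,k) * y t $ k + x t $ i * K $$ (i,k) * y' $ k)) (at t)"
  proof (intro DERIV_sum)
    fix i k assume i: "i \<in> {..<n}" and k: "k \<in> {..<m}"
    have "((\<lambda>s. x s $ i * K $$ (i,k)) has_real_derivative (x' $ i * K $$ (i,k))) (at t)"
      using dx[of i] i by (auto intro: DERIV_cmult_right)
    from DERIV_mult[OF this dy[of k]] k
    show "((\<lambda>s. x s $ i * K $$ (i,k) * y s $ k) has_real_derivative (x' $ i * K $$ (i,k) * y t $ k + x t $ i * K $$ (i,k) * y' $ k)) (at t)"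
      by (simp add: algebra_simps)
  qed
  moreover have "(\<Sum>i<n. \<Sum>k<m. x' $ i * K $$ (i,k) * y t $ k + x t $ i * K $$ (i,k) * y' $ k) =
      x' \<bullet> (K *\<^sub>v y t) + x t \<bullet> (K *\<^sub>v y')"
    using x y K by (simp add: bf_plain sum.distrib)
  ultimately show ?thesis unfolding eq by simp
qed




lemma mv_add: "dim_vec a = dim_col A \<Longrightarrow> dim_vec b = dim_col A \<Longrightarrow> A *\<^sub>v (a + b) = A *\<^sub>v a + A *\<^sub>v (b :: real vec)"
  by (rule mult_add_distrib_mat_vec[where nr="dim_row A" and nc="dim_col A"]) (auto intro: carrier_vecI carrier_matI)
lemma mv_minus: "dim_vec a = dim_col A \<Longrightarrow> dim_vec b = dim_col A \<Longrightarrow> A *\<^sub>v (a - b) = A *\<^sub>v a - A *\<^sub>v (b :: real vec)"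
  by (rule mult_minus_distrib_mat_vec[where nr="dim_row A" and nc="dim_col A"]) (auto intro: carrier_vecI carrier_matI)
lemma mv_smult: "dim_vec a = dim_col A \<Longrightarrow> A *\<^sub>v (c \<cdot>\<^sub>v a) = c \<cdot>\<^sub>v (A *\<^sub>v (a :: real vec))"
  by (rule mult_mat_vec[where nr="dim_row A" and nc="dim_col A"]) (auto intro: carrier_vecI carrier_matI)
lemma sp_add: "dim_vec a = dim_vec x \<Longrightarrow> dim_vec b = dim_vec x \<Longrightarrow> x \<bullet> (a + b) = x \<bullet> a + x \<bullet> (b :: real vec)"
  by (rule scalar_prod_add_distrib[where n="dim_vec x"]) (auto intro: carrier_vecI)
lemma sp_minus: "dim_vec a = dim_vec x \<Longrightarrow> dim_vec b = dim_vec x \<Longrightarrow> x \<bullet> (a - b) = x \<bullet> a - x \<bullet> (b :: real vec)"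
  by (rule scalar_prod_minus_distrib[where n="dim_vec x"]) (auto intro: carrier_vecI)
lemma sp_smult: "dim_vec a = dim_vec x \<Longrightarrow> x \<bullet> (c \<cdot>\<^sub>v a) = c * (x \<bullet> (a :: real vec))"
  by (rule scalar_prod_smult_right) simp
lemma tr_mult: "dim_col A = dim_row B \<Longrightarrow> (A * B)\<^sup>T = B\<^sup>T * (A\<^sup>T :: real mat)"
  by (rule transpose_mult[of _ "dim_row A" "dim_col A" _ "dim_col B"]) (auto intro: carrier_matI)

lemma kron_flip:
  assumes "dim_vec x = dim_row X * dim_row Y" "dim_vec z = dim_col X * dim_col Y"
  shows "x \<bullet> (kron X Y *\<^sub>v z) = z \<bullet> (kron (X\<^sup>T) (Y\<^sup>T) *\<^sub>v x)"
proof -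
  have "x \<bullet> (kron X Y *\<^sub>v z) = z \<bullet> ((kron X Y)\<^sup>T *\<^sub>v x)"
    by (rule bf_swap) (use assms in \<open>auto intro: carrier_vecI carrier_matI\<close>)
  then show ?thesis by (simp add: kron_transpose)
qed

lemma E_T[simp]: "(E0L n)\<^sup>T = E0L n" "(E0R n)\<^sup>T = E0R n" "(ELR a b)\<^sup>T = ERL a b" "(ERL a b)\<^sup>T = ELR a b"
  by (auto simp: E0L_def E0R_def ERL_def intro!: eq_matI)

lemma bf_kron_entries:
  assumes "dim_vec x = n * dim_row Y" "dim_vec z = n' * dim_col Y"
    and "X1 \<in> carrier_mat n n'" "X2 \<in> carrier_mat n n'"
    and "\<And>i k. i < n \<Longrightarrow> k < n' \<Longrightarrow> X1 $$ (i,k) = a * X2 $$ (i,k) + b * X3 $$ (i,k)"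
    and "X3 \<in> carrier_mat n n'"
  shows "x \<bullet> (kron X1 Y *\<^sub>v z) = a * (x \<bullet> (kron X2 Y *\<^sub>v z)) + b * (x \<bullet> (kron X3 Y *\<^sub>v z))"
proof -
  have d: "dim_row X1 = n" "dim_col X1 = n'" "dim_row X2 = n" "dim_col X2 = n'" "dim_row X3 = n" "dim_col X3 = n'"
    using assms by auto
  define G where "G i k = (\<Sum>j<dim_row Y. \<Sum>l<dim_col Y. x $ (i*dim_row Y+j) * Y $$ (j,l) * z $ (k*dim_col Y+l))" for i k
  have e: "x \<bullet> (kron X Y *\<^sub>v z) = (\<Sum>i<n. \<Sum>k<n'. X $$ (i,k) * G i k)"
    if "dim_row X = n" "dim_col X = n'" for X
    using bf_kron[of x X Y z] assms(1,2) that by (simp add: G_def)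
  have "(\<Sum>i<n. \<Sum>k<n'. X1 $$ (i,k) * G i k) = (\<Sum>i<n. \<Sum>k<n'. a * (X2 $$ (i,k) * G i k) + b * (X3 $$ (i,k) * G i k))"
    by (intro sum.cong refl) (simp add: assms(5) algebra_simps)
  then show ?thesis
    using e[OF d(1,2)] e[OF d(3,4)] e[OF d(5,6)] by (simp add: sum.distrib sum_distrib_left)
qed

lemma bf_kron_negadd:
  assumes "dim_vec x = n * dim_row Y" "dim_vec z = n' * dim_col Y"
    and "A \<in> carrier_mat n n'" "B \<in> carrier_mat n n'"
  shows "x \<bullet> (kron (- A + B) Y *\<^sub>v z) = (-1) * (x \<bullet> (kron A Y *\<^sub>v z)) + 1 * (x \<bullet> (kron B Y *\<^sub>v z))"
  by (rule bf_kron_entries[OF assms(1,2) _ assms(3)]) (use assms in auto)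

lemma bf_kron_negminus:
  assumes "dim_vec x = n * dim_row Y" "dim_vec z = n' * dim_col Y"
    and "A \<in> carrier_mat n n'" "B \<in> carrier_mat n n'"
  shows "x \<bullet> (kron (- A - B) Y *\<^sub>v z) = (-1) * (x \<bullet> (kron A Y *\<^sub>v z)) + (-1) * (x \<bullet> (kron B Y *\<^sub>v z))"
  by (rule bf_kron_entries[OF assms(1,2) _ assms(3)]) (use assms in auto)

lemma bf_kron_plus_smult:
  assumes "dim_vec x = n * dim_row Y" "dim_vec z = n' * dim_col Y"
    and "A \<in> carrier_mat n n'" "B \<in> carrier_mat n n'"
  shows "x \<bullet> (kron (A + c \<cdot>\<^sub>m B) Y *\<^sub>v z) = 1 * (x \<bullet> (kron A Y *\<^sub>v z)) + c * (x \<bullet> (kron B Y *\<^sub>v z))"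
  by (rule bf_kron_entries[OF assms(1,2) _ assms(3)]) (use assms in auto)

lemma E_car: "E0L n \<in> carrier_mat n n" "E0R n \<in> carrier_mat n n" "ELR a b \<in> carrier_mat a b" "ERL a b \<in> carrier_mat b a"
  by (auto intro: carrier_matI)
lemmas E0L_car = E_car(1) and E0R_car = E_car(2)

lemma energy_identity:
  fixes nxL nyL nxR nyR :: nat and \<tau> :: real
    and HxL HyL HxR HyR HxLi HxRi MxL MxR SxL SxR IF2C IC2F :: "real mat"
    and U Ut Utt V Vt Vtt :: "real vec"
  assumes n: "nxL \<ge> 2" "nyL \<ge> 2" "nxR \<ge> 2" "nyR \<ge> 2"
    and car: "HxL \<in> carrier_mat nxL nxL" "HyL \<in> carrier_mat nyL nyL" "HxR \<in> carrier_mat nxR nxR" "HyR \<in> carrier_mat nyR nyR"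
      "HxLi \<in> carrier_mat nxL nxL" "HxRi \<in> carrier_mat nxR nxR" "MxL \<in> carrier_mat nxL nxL" "MxR \<in> carrier_mat nxR nxR"
      "SxL \<in> carrier_mat nxL nxL" "SxR \<in> carrier_mat nxR nxR" "IF2C \<in> carrier_mat nyL nyR" "IC2F \<in> carrier_mat nyR nyL"
    and sym: "HxL\<^sup>T = HxL" "HyL\<^sup>T = HyL" "HxR\<^sup>T = HxR" "HyR\<^sup>T = HyR" "MxL\<^sup>T = MxL" "MxR\<^sup>T = MxR"
    and inv: "HxL * HxLi = 1\<^sub>m nxL" "HxR * HxRi = 1\<^sub>m nxR"
    and I: "HyR * IC2F = (HyL * IF2C)\<^sup>T"
    and vc: "U \<in> carrier_vec (nxL*nyL)" "Ut \<in> carrier_vec (nxL*nyL)" "Utt \<in> carrier_vec (nxL*nyL)"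
       "V \<in> carrier_vec (nxR*nyR)" "Vt \<in> carrier_vec (nxR*nyR)" "Vtt \<in> carrier_vec (nxR*nyR)"
    and odeU: "Utt = kron (HxLi * (- MxL + E0L nxL * SxL)) (1\<^sub>m nyL) *\<^sub>v U
                          + (1/2) \<cdot>\<^sub>v (kron HxLi (1\<^sub>m nyL) *\<^sub>v ((kron SxL (1\<^sub>m nyL))\<^sup>T *\<^sub>v (kron (E0L nxL) (1\<^sub>m nyL) *\<^sub>v U - kron (ELR nxL nxR) IF2C *\<^sub>v V)))
                          - \<tau> \<cdot>\<^sub>v (kron HxLi (1\<^sub>m nyL) *\<^sub>v (kron (E0L nxL) (1\<^sub>m nyL) *\<^sub>v U - kron (ELR nxL nxR) IF2C *\<^sub>v V))
                          - (1/2) \<cdot>\<^sub>v (kron HxLi (1\<^sub>m nyL) *\<^sub>v (kron (E0L nxL) (1\<^sub>m nyL) *\<^sub>v (kron SxL (1\<^sub>m nyL) *\<^sub>v U)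
                                        - kron (ELR nxL nxR) IF2C *\<^sub>v (kron SxR (1\<^sub>m nyR) *\<^sub>v V)))"
    and odeV: "Vtt = kron (HxRi * (- MxR - E0R nxR * SxR)) (1\<^sub>m nyR) *\<^sub>v V
                          - (1/2) \<cdot>\<^sub>v (kron HxRi (1\<^sub>m nyR) *\<^sub>v ((kron SxR (1\<^sub>m nyR))\<^sup>T *\<^sub>v (kron (E0R nxR) (1\<^sub>m nyR) *\<^sub>v V - kron (ERL nxL nxR) IC2F *\<^sub>v U)))
                          - \<tau> \<cdot>\<^sub>v (kron HxRi (1\<^sub>m nyR) *\<^sub>v (kron (E0R nxR) (1\<^sub>m nyR) *\<^sub>v V - kron (ERL nxL nxR) IC2F *\<^sub>v U))
                          + (1/2) \<cdot>\<^sub>v (kron HxRi (1\<^sub>m nyR) *\<^sub>v (kron (E0R nxR) (1\<^sub>m nyR) *\<^sub>v (kron SxR (1\<^sub>m nyR) *\<^sub>v V)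
                                        - kron (ERL nxL nxR) IC2F *\<^sub>v (kron SxL (1\<^sub>m nyL) *\<^sub>v U)))"
  shows "2 * (Ut \<bullet> (kron HxL HyL *\<^sub>v Utt)) + 2 * (Vt \<bullet> (kron HxR HyR *\<^sub>v Vtt))
      + (Ut \<bullet> (kron MxL HyL *\<^sub>v U) + U \<bullet> (kron MxL HyL *\<^sub>v Ut))
      - (Ut \<bullet> (kron (E0L nxL * SxL) HyL *\<^sub>v U) + U \<bullet> (kron (E0L nxL * SxL) HyL *\<^sub>v Ut))
      + \<tau> * (Ut \<bullet> (kron (E0L nxL) HyL *\<^sub>v U) + U \<bullet> (kron (E0L nxL) HyL *\<^sub>v Ut))
      + (Vt \<bullet> (kron MxR HyR *\<^sub>v V) + V \<bullet> (kron MxR HyR *\<^sub>v Vt))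
      + (Vt \<bullet> (kron (E0R nxR * SxR) HyR *\<^sub>v V) + V \<bullet> (kron (E0R nxR * SxR) HyR *\<^sub>v Vt))
      + \<tau> * (Vt \<bullet> (kron (E0R nxR) HyR *\<^sub>v V) + V \<bullet> (kron (E0R nxR) HyR *\<^sub>v Vt))
      + (Ut \<bullet> (kron (SxL\<^sup>T * ELR nxL nxR) (HyL * IF2C) *\<^sub>v V) + U \<bullet> (kron (SxL\<^sup>T * ELR nxL nxR) (HyL * IF2C) *\<^sub>v Vt))
      - (Vt \<bullet> (kron (SxR\<^sup>T * ERL nxL nxR) (HyR * IC2F) *\<^sub>v U) + V \<bullet> (kron (SxR\<^sup>T * ERL nxL nxR) (HyR * IC2F) *\<^sub>v Ut))
      - 2 * \<tau> * (Ut \<bullet> (kron (ELR nxL nxR) (HyL * IF2C) *\<^sub>v V) + U \<bullet> (kron (ELR nxL nxR) (HyL * IF2C) *\<^sub>v Vt)) = 0"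
proof -
  have dims[simp]: "dim_row HxL = nxL" "dim_col HxL = nxL" "dim_row HyL = nyL" "dim_col HyL = nyL"
    "dim_row HxR = nxR" "dim_col HxR = nxR" "dim_row HyR = nyR" "dim_col HyR = nyR"
    "dim_row HxLi = nxL" "dim_col HxLi = nxL" "dim_row HxRi = nxR" "dim_col HxRi = nxR"
    "dim_row MxL = nxL" "dim_col MxL = nxL" "dim_row MxR = nxR" "dim_col MxR = nxR"
    "dim_row SxL = nxL" "dim_col SxL = nxL" "dim_row SxR = nxR" "dim_col SxR = nxR"
    "dim_row IF2C = nyL" "dim_col IF2C = nyR" "dim_row IC2F = nyR" "dim_col IC2F = nyL"
    "dim_vec U = nxL*nyL" "dim_vec Ut = nxL*nyL" "dim_vec Utt = nxL*nyL"
    "dim_vec V = nxR*nyR" "dim_vec Vt = nxR*nyR" "dim_vec Vtt = nxR*nyR"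
    using car vc by auto
  have invL: "HxL * (HxLi * Z) = Z" if "dim_row Z = nxL" for Z
  proof -
    have "HxL * (HxLi * Z) = (HxL * HxLi) * Z"
      by (rule assoc_mult_mat[symmetric, of _ nxL nxL _ nxL _ "dim_col Z"]) (use car that in \<open>auto intro: carrier_matI\<close>)
    then show ?thesis using that inv by simp
  qed
  have invR: "HxR * (HxRi * Z) = Z" if "dim_row Z = nxR" for Z
  proof -
    have "HxR * (HxRi * Z) = (HxR * HxRi) * Z"
      by (rule assoc_mult_mat[symmetric, of _ nxR nxR _ nxR _ "dim_col Z"]) (use car that in \<open>auto intro: carrier_matI\<close>)
    then show ?thesis using that inv by simp
  qed
  have IT: "(HyR * IC2F)\<^sup>T = HyL * IF2C" using I by simp
  note rules = mv_add mv_minus mv_smult sp_add sp_minus sp_smult kron_mult_vec kron_transpose tr_mult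
     invL invR inv left_mult_one_mat' right_mult_one_mat' sym I IT kron_flip[of U] kron_flip[of V]
  have a1: "Ut \<bullet> (kron (- MxL + E0L nxL * SxL) HyL *\<^sub>v U) = (-1) * (Ut \<bullet> (kron MxL HyL *\<^sub>v U)) + 1 * (Ut \<bullet> (kron (E0L nxL * SxL) HyL *\<^sub>v U))"
    by (rule bf_kron_negadd[OF _ _ car(7) mult_carrier_mat[OF E0L_car car(9)]]) simp_all
  have a2: "Vt \<bullet> (kron (- MxR - E0R nxR * SxR) HyR *\<^sub>v V) = (-1) * (Vt \<bullet> (kron MxR HyR *\<^sub>v V)) + (-1) * (Vt \<bullet> (kron (E0R nxR * SxR) HyR *\<^sub>v V))"
    by (rule bf_kron_negminus[OF _ _ car(8) mult_carrier_mat[OF E0R_car car(10)]]) simp_all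
  show ?thesis
    unfolding odeU odeV
    apply (simp add: rules)
    apply (simp only: a1 a2)
    apply (simp add: algebra_simps diff_divide_distrib)
    done
qed


lemma kron_car: "A \<in> carrier_mat a b \<Longrightarrow> B \<in> carrier_mat c d \<Longrightarrow> kron A B \<in> carrier_mat (a*c) (b*d)"
  by (rule carrier_matI) auto

lemma pd_psd: "pd_mat n (A::real mat) \<Longrightarrow> psd_mat n A"
  unfolding pd_mat_def psd_mat_def
proof (intro conjI ballI)
  fix x :: "real vec" assume a: "A \<in> carrier_mat n n \<and> (\<forall>x\<in>carrier_vec n. x \<noteq> 0\<^sub>v n \<longrightarrow> 0 < x \<bullet> (A *\<^sub>v x))" and x: "x \<in> carrier_vec n"
  show "0 \<le> x \<bullet> (A *\<^sub>v x)"
  proof (cases "x = 0\<^sub>v n")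
    case True
    have "A *\<^sub>v x \<in> carrier_vec n" using a x by auto
    then show ?thesis using True by simp
  next
    case False then show ?thesis using a x by fastforce
  qed
qed (auto simp: pd_mat_def)

lemma pd_diag_pos: assumes "pd_mat n (A::real mat)" "j < n" shows "A $$ (j,j) > 0"
proof -
  have A: "A \<in> carrier_mat n n" using assms by (simp add: pd_mat_def)
  have "unit_vec n j \<bullet> (A *\<^sub>v unit_vec n j) > 0"
    using assms by (auto simp: pd_mat_def)
  moreover have "unit_vec n j \<bullet> (A *\<^sub>v unit_vec n j) = A $$ (j,j)"
    using A assms(2) by simp
  ultimately show ?thesis by simp
qed



lemma DERIV_zero_if: "(f has_real_derivative D) F \<Longrightarrow> D = 0 \<Longrightarrow> (f has_real_derivative 0) F"
  by simp

lemma MtSR_index: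
  assumes "S \<in> carrier_mat n n'" "i < n'" "k < n" "n > 0" "k < n'"
  shows "((E0R n * S)\<^sup>T * (E0R n * S)) $$ (i,k) = S $$ (0,i) * S $$ (0,k)"
proof -
  have "((E0R n * S)\<^sup>T * (E0R n * S)) $$ (i,k) = (\<Sum>t<n. (E0R n * S) $$ (t,i) * (E0R n * S) $$ (t,k))"
    using assms by (simp add: scalar_prod_def atLeast0LessThan)
  also have "\<dots> = (\<Sum>t<n. (if t = 0 then 1 else 0) * (S $$ (0,i) * S $$ (0,k)))"
    using assms by (intro sum.cong refl) (auto simp del: index_mult_mat simp add: E0R_S_index)
  also have "\<dots> = S $$ (0,i) * S $$ (0,k)"
    using assms by (subst sum_single) auto
  finally show ?thesis .
qed

theorem mainTheorem3:
  fixes nxL nyL nxR nyR :: nat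
    and hxL hxR \<alpha> \<tau> :: real
    and HxL HyL HxR HyR HxLi HxRi MxL MxR MtL MtR SxL SxR IF2C IC2F :: "real mat"
  assumes n: "nxL \<ge> 2" "nyL \<ge> 2" "nxR \<ge> 2" "nyR \<ge> 2"
    and h: "hxL > 0" "hxR > 0"
    (* (i) *)
    and HxL: "diagonal_mat HxL" "pd_mat nxL HxL"
    and HyL: "diagonal_mat HyL" "pd_mat nyL HyL"
    and HxR: "diagonal_mat HxR" "pd_mat nxR HxR"
    and HyR: "diagonal_mat HyR" "pd_mat nyR HyR"
    and HxLi: "HxLi \<in> carrier_mat nxL nxL" "HxL * HxLi = 1\<^sub>m nxL" "HxLi * HxL = 1\<^sub>m nxL"
    and HxRi: "HxRi \<in> carrier_mat nxR nxR" "HxR * HxRi = 1\<^sub>m nxR" "HxRi * HxR = 1\<^sub>m nxR"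
    (* (ii) *)
    and S: "SxL \<in> carrier_mat nxL nxL" "SxR \<in> carrier_mat nxR nxR"
    and alpha: "\<alpha> > 0"
    and Mleft: "MxL \<in> carrier_mat nxL nxL" "symmetric_mat MxL"
        "symmetric_mat MtL" "psd_mat nxL MtL"
        "MxL = MtL + (hxL * \<alpha>) \<cdot>\<^sub>m ((E0L nxL * SxL)\<^sup>T * (E0L nxL * SxL))"
    and Mright: "MxR \<in> carrier_mat nxR nxR" "symmetric_mat MxR"
        "symmetric_mat MtR" "psd_mat nxR MtR"
        "MxR = MtR + (hxR * \<alpha>) \<cdot>\<^sub>m ((E0R nxR * SxR)\<^sup>T * (E0R nxR * SxR))"
    (* (iii) *)
    and I: "IF2C \<in> carrier_mat nyL nyR" "IC2F \<in> carrier_mat nyR nyL"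
        "HyR * IC2F = (HyL * IF2C)\<^sup>T"
        "psd_mat nyL (HyL * (1\<^sub>m nyL - IF2C * IC2F))"
        "psd_mat nyR (HyR * (1\<^sub>m nyR - IC2F * IF2C))"
    (* (iv) *)
    and tau: "\<tau> \<ge> max (1 / (2 * \<alpha> * hxL)) (1 / (2 * \<alpha> * hxR))"
  defines "En \<equiv> (\<lambda>u ut v vt.
        ut \<bullet> (kron HxL HyL *\<^sub>v ut) + vt \<bullet> (kron HxR HyR *\<^sub>v vt)
      + u \<bullet> (kron MxL HyL *\<^sub>v u) - u \<bullet> (kron (E0L nxL * SxL) HyL *\<^sub>v u)
      + \<tau> * (u \<bullet> (kron (E0L nxL) HyL *\<^sub>v u))
      + v \<bullet> (kron MxR HyR *\<^sub>v v) + v \<bullet> (kron (E0R nxR * SxR) HyR *\<^sub>v v)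
      + \<tau> * (v \<bullet> (kron (E0R nxR) HyR *\<^sub>v v))
      + u \<bullet> (kron (SxL\<^sup>T * ELR nxL nxR) (HyL * IF2C) *\<^sub>v v)
      - v \<bullet> (kron (SxR\<^sup>T * ERL nxL nxR) (HyR * IC2F) *\<^sub>v u)
      - 2 * \<tau> * (u \<bullet> (kron (ELR nxL nxR) (HyL * IF2C) *\<^sub>v v)))"
  shows "(\<forall>u ut v vt. u \<in> carrier_vec (nxL * nyL) \<longrightarrow> ut \<in> carrier_vec (nxL * nyL)
            \<longrightarrow> v \<in> carrier_vec (nxR * nyR) \<longrightarrow> vt \<in> carrier_vec (nxR * nyR)
            \<longrightarrow> En u ut v vt \<ge> 0)
    \<and> (\<forall>(u :: real \<Rightarrow> real vec) u' u'' (v :: real \<Rightarrow> real vec) v' v''.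
          (\<forall>t. u t \<in> carrier_vec (nxL * nyL) \<and> u' t \<in> carrier_vec (nxL * nyL)
               \<and> u'' t \<in> carrier_vec (nxL * nyL)
               \<and> v t \<in> carrier_vec (nxR * nyR) \<and> v' t \<in> carrier_vec (nxR * nyR)
               \<and> v'' t \<in> carrier_vec (nxR * nyR)) \<longrightarrow>
          (\<forall>t. \<forall>i < nxL * nyL. ((\<lambda>s. u s $ i) has_real_derivative (u' t $ i)) (at t)
                            \<and> ((\<lambda>s. u' s $ i) has_real_derivative (u'' t $ i)) (at t)) \<longrightarrow>
          (\<forall>t. \<forall>i < nxR * nyR. ((\<lambda>s. v s $ i) has_real_derivative (v' t $ i)) (at t)
                            \<and> ((\<lambda>s. v' s $ i) has_real_derivative (v'' t $ i)) (at t)) \<longrightarrow>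
          (\<forall>t. let wL = kron (E0L nxL) (1\<^sub>m nyL) *\<^sub>v u t - kron (ELR nxL nxR) IF2C *\<^sub>v v t;
                   wR = kron (E0R nxR) (1\<^sub>m nyR) *\<^sub>v v t - kron (ERL nxL nxR) IC2F *\<^sub>v u t;
                   HLi = kron HxLi (1\<^sub>m nyL); HRi = kron HxRi (1\<^sub>m nyR);
                   SL = kron SxL (1\<^sub>m nyL); SR = kron SxR (1\<^sub>m nyR)
               in u'' t = kron (HxLi * (- MxL + E0L nxL * SxL)) (1\<^sub>m nyL) *\<^sub>v u t
                          + (1/2) \<cdot>\<^sub>v (HLi *\<^sub>v (SL\<^sup>T *\<^sub>v wL))
                          - \<tau> \<cdot>\<^sub>v (HLi *\<^sub>v wL)
                          - (1/2) \<cdot>\<^sub>v (HLi *\<^sub>v (kron (E0L nxL) (1\<^sub>m nyL) *\<^sub>v (SL *\<^sub>v u t)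
                                        - kron (ELR nxL nxR) IF2C *\<^sub>v (SR *\<^sub>v v t)))
                \<and> v'' t = kron (HxRi * (- MxR - E0R nxR * SxR)) (1\<^sub>m nyR) *\<^sub>v v t
                          - (1/2) \<cdot>\<^sub>v (HRi *\<^sub>v (SR\<^sup>T *\<^sub>v wR))
                          - \<tau> \<cdot>\<^sub>v (HRi *\<^sub>v wR)
                          + (1/2) \<cdot>\<^sub>v (HRi *\<^sub>v (kron (E0R nxR) (1\<^sub>m nyR) *\<^sub>v (SR *\<^sub>v v t)
                                        - kron (ERL nxL nxR) IC2F *\<^sub>v (SL *\<^sub>v u t)))) \<longrightarrow>
          (\<forall>t. ((\<lambda>s. En (u s) (u' s) (v s) (v' s)) has_real_derivative 0) (at t)))"
proof -
  have car: "HxL \<in> carrier_mat nxL nxL" "HyL \<in> carrier_mat nyL nyL" "HxR \<in> carrier_mat nxR nxR" "HyR \<in> carrier_mat nyR nyR"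
      "HxLi \<in> carrier_mat nxL nxL" "HxRi \<in> carrier_mat nxR nxR" "MxL \<in> carrier_mat nxL nxL" "MxR \<in> carrier_mat nxR nxR"
      "SxL \<in> carrier_mat nxL nxL" "SxR \<in> carrier_mat nxR nxR" "IF2C \<in> carrier_mat nyL nyR" "IC2F \<in> carrier_mat nyR nyL"
    using HxL(2) HyL(2) HxR(2) HyR(2) HxLi(1) HxRi(1) Mleft(1) Mright(1) S I(1) I(2) by (simp_all add: pd_mat_def)
  have carM: "MtL \<in> carrier_mat nxL nxL" "MtR \<in> carrier_mat nxR nxR" using Mleft Mright by (auto simp: psd_mat_def)
  have sym: "HxL\<^sup>T = HxL" "HyL\<^sup>T = HyL" "HxR\<^sup>T = HxR" "HyR\<^sup>T = HyR" "MxL\<^sup>T = MxL" "MxR\<^sup>T = MxR"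
    using diag_sym[OF HxL(1) car(1)] diag_sym[OF HyL(1) car(2)] diag_sym[OF HxR(1) car(3)] diag_sym[OF HyR(1) car(4)]
      Mleft(2) Mright(2) by (auto simp: symmetric_mat_def)
  have psd: "psd_mat nxL HxL" "psd_mat nyL HyL" "psd_mat nxR HxR" "psd_mat nyR HyR"
    using HxL HyL HxR HyR by (auto intro: pd_psd)
  have dpos: "\<And>j. j < nyL \<Longrightarrow> HyL $$ (j,j) \<ge> 0" "\<And>j. j < nyR \<Longrightarrow> HyR $$ (j,j) \<ge> 0"
    using pd_diag_pos[OF HyL(2)] pd_diag_pos[OF HyR(2)] by (auto intro: less_imp_le)
  have n0: "nxL > 0" "nyL > 0" "nxR > 0" "nyR > 0" using n by auto
  show ?thesis
  proof (rule conjI)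
   show "\<forall>u ut v vt. u \<in> carrier_vec (nxL * nyL) \<longrightarrow> ut \<in> carrier_vec (nxL * nyL)
            \<longrightarrow> v \<in> carrier_vec (nxR * nyR) \<longrightarrow> vt \<in> carrier_vec (nxR * nyR)
            \<longrightarrow> En u ut v vt \<ge> 0"
   proof (intro allI impI)
    fix u ut v vt :: "real vec"
    assume uc: "u \<in> carrier_vec (nxL * nyL)" and utc: "ut \<in> carrier_vec (nxL * nyL)"
      and vc: "v \<in> carrier_vec (nxR * nyR)" and vtc: "vt \<in> carrier_vec (nxR * nyR)"
    have du: "dim_vec u = nxL * nyL" "dim_vec ut = nxL * nyL" "dim_vec v = nxR * nyR" "dim_vec vt = nxR * nyR"
      using uc utc vc vtc by auto
    have dm[simp]: "dim_row HxL = nxL" "dim_col HxL = nxL" "dim_row HyL = nyL" "dim_col HyL = nyL"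
      "dim_row HxR = nxR" "dim_col HxR = nxR" "dim_row HyR = nyR" "dim_col HyR = nyR"
      "dim_row MtL = nxL" "dim_col MtL = nxL" "dim_row MtR = nxR" "dim_col MtR = nxR"
      "dim_row SxL = nxL" "dim_col SxL = nxL" "dim_row SxR = nxR" "dim_col SxR = nxR"
      "dim_row IF2C = nyL" "dim_col IF2C = nyR" "dim_row IC2F = nyR" "dim_col IC2F = nyL"
      using car carM by auto
    define pL where "pL = red nxL nyL (\<lambda>i. if i = nxL - 1 then 1 else 0) u"
    define dL where "dL = red nxL nyL (\<lambda>i. SxL $$ (nxL - 1, i)) u"
    define qR where "qR = red nxR nyR (\<lambda>i. if i = 0 then 1 else 0) v"
    define dR where "dR = red nxR nyR (\<lambda>i. SxR $$ (0, i)) v"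
    have K1: "ut \<bullet> (kron HxL HyL *\<^sub>v ut) \<ge> 0"
      by (rule psd_kron_diag[OF psd(1) HyL(1) car(2) dpos(1) du(2)])
    have K2: "vt \<bullet> (kron HxR HyR *\<^sub>v vt) \<ge> 0"
      by (rule psd_kron_diag[OF psd(3) HyR(1) car(4) dpos(2) du(4)])
    have K3: "u \<bullet> (kron MtL HyL *\<^sub>v u) \<ge> 0"
      by (rule psd_kron_diag[OF Mleft(4) HyL(1) car(2) dpos(1) du(1)])
    have K4: "v \<bullet> (kron MtR HyR *\<^sub>v v) \<ge> 0"
      by (rule psd_kron_diag[OF Mright(4) HyR(1) car(4) dpos(2) du(3)])
    have PLc: "(E0L nxL * SxL)\<^sup>T * (E0L nxL * SxL) \<in> carrier_mat nxL nxL"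
      using mult_carrier_mat[OF transpose_carrier_mat[THEN iffD2, OF mult_carrier_mat[OF E0L_car car(9)]] mult_carrier_mat[OF E0L_car car(9)]] .
    have PRc: "(E0R nxR * SxR)\<^sup>T * (E0R nxR * SxR) \<in> carrier_mat nxR nxR"
      using mult_carrier_mat[OF transpose_carrier_mat[THEN iffD2, OF mult_carrier_mat[OF E0R_car car(10)]] mult_carrier_mat[OF E0R_car car(10)]] .
    have M1: "u \<bullet> (kron MxL HyL *\<^sub>v u) = 1 * (u \<bullet> (kron MtL HyL *\<^sub>v u))
        + (hxL * \<alpha>) * (u \<bullet> (kron ((E0L nxL * SxL)\<^sup>T * (E0L nxL * SxL)) HyL *\<^sub>v u))"
      unfolding Mleft(5) by (rule bf_kron_plus_smult[OF _ _ carM(1) PLc]) (simp_all add: du)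
    have M2: "v \<bullet> (kron MxR HyR *\<^sub>v v) = 1 * (v \<bullet> (kron MtR HyR *\<^sub>v v))
        + (hxR * \<alpha>) * (v \<bullet> (kron ((E0R nxR * SxR)\<^sup>T * (E0R nxR * SxR)) HyR *\<^sub>v v))"
      unfolding Mright(5) by (rule bf_kron_plus_smult[OF _ _ carM(2) PRc]) (simp_all add: du)
    have R1: "u \<bullet> (kron ((E0L nxL * SxL)\<^sup>T * (E0L nxL * SxL)) HyL *\<^sub>v u) = dL \<bullet> (HyL *\<^sub>v dL)"
      using bf_rank1[of u "(E0L nxL * SxL)\<^sup>T * (E0L nxL * SxL)" HyL u "\<lambda>i. SxL $$ (nxL - 1, i)" "\<lambda>i. SxL $$ (nxL - 1, i)"]
        MtS_index[OF car(9)] n0 du by (simp add: dL_def)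
    have R2: "u \<bullet> (kron (E0L nxL * SxL) HyL *\<^sub>v u) = pL \<bullet> (HyL *\<^sub>v dL)"
      using bf_rank1[of u "E0L nxL * SxL" HyL u "\<lambda>i. if i = nxL - 1 then 1 else 0" "\<lambda>i. SxL $$ (nxL - 1, i)"]
        E0L_S_index[OF car(9)] n0 du by (simp add: dL_def pL_def)
    have R3: "u \<bullet> (kron (E0L nxL) HyL *\<^sub>v u) = pL \<bullet> (HyL *\<^sub>v pL)"
      using bf_rank1[of u "E0L nxL" HyL u "\<lambda>i. if i = nxL - 1 then 1 else 0" "\<lambda>i. if i = nxL - 1 then 1 else 0"]
        E0L_index n0 du by (simp add: pL_def)
    have R4: "v \<bullet> (kron (E0R nxR * SxR) HyR *\<^sub>v v) = qR \<bullet> (HyR *\<^sub>v dR)"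
      using bf_rank1[of v "E0R nxR * SxR" HyR v "\<lambda>i. if i = 0 then 1 else 0" "\<lambda>i. SxR $$ (0, i)"]
        E0R_S_index[OF car(10)] n0 du by (simp add: dR_def qR_def)
    have R5: "v \<bullet> (kron (E0R nxR) HyR *\<^sub>v v) = qR \<bullet> (HyR *\<^sub>v qR)"
      using bf_rank1[of v "E0R nxR" HyR v "\<lambda>i. if i = 0 then 1 else 0" "\<lambda>i. if i = 0 then 1 else 0"]
        E0R_index n0 du by (simp add: qR_def)
    have R6: "v \<bullet> (kron ((E0R nxR * SxR)\<^sup>T * (E0R nxR * SxR)) HyR *\<^sub>v v) = dR \<bullet> (HyR *\<^sub>v dR)"
      using bf_rank1[of v "(E0R nxR * SxR)\<^sup>T * (E0R nxR * SxR)" HyR v "\<lambda>i. SxR $$ (0, i)" "\<lambda>i. SxR $$ (0, i)"]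
        MtSR_index[OF car(10)] n0 du by (simp add: dR_def)
    have R7: "u \<bullet> (kron (SxL\<^sup>T * ELR nxL nxR) (HyL * IF2C) *\<^sub>v v) = dL \<bullet> ((HyL * IF2C) *\<^sub>v qR)"
      using bf_rank1[of u "SxL\<^sup>T * ELR nxL nxR" "HyL * IF2C" v "\<lambda>i. SxL $$ (nxL - 1, i)" "\<lambda>i. if i = 0 then 1 else 0"]
        St_ELR_index[OF car(9)] n0 du by (simp add: dL_def qR_def)
    have R8: "v \<bullet> (kron (SxR\<^sup>T * ERL nxL nxR) (HyR * IC2F) *\<^sub>v u) = dR \<bullet> ((HyR * IC2F) *\<^sub>v pL)"
      using bf_rank1[of v "SxR\<^sup>T * ERL nxL nxR" "HyR * IC2F" u "\<lambda>i. SxR $$ (0, i)" "\<lambda>i. if i = nxL - 1 then 1 else 0"]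
        St_ERL_index[OF car(10)] n0 du by (simp add: dR_def pL_def)
    have R9: "u \<bullet> (kron (ELR nxL nxR) (HyL * IF2C) *\<^sub>v v) = pL \<bullet> ((HyL * IF2C) *\<^sub>v qR)"
      using bf_rank1[of u "ELR nxL nxR" "HyL * IF2C" v "\<lambda>i. if i = nxL - 1 then 1 else 0" "\<lambda>i. if i = 0 then 1 else 0"]
        ELR_index n0 du by (simp add: pL_def qR_def)
    have tauL: "\<tau> \<ge> 1/(2*(hxL*\<alpha>))" and tauR: "\<tau> \<ge> 1/(2*(hxR*\<alpha>))"
      using tau by (simp_all add: mult_ac)
    have SI: "(hxL*\<alpha>)*(dL \<bullet> (HyL *\<^sub>v dL)) - pL \<bullet> (HyL *\<^sub>v dL) + \<tau>*(pL \<bullet> (HyL *\<^sub>v pL))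
       + (hxR*\<alpha>)*(dR \<bullet> (HyR *\<^sub>v dR)) + qR \<bullet> (HyR *\<^sub>v dR) + \<tau>*(qR \<bullet> (HyR *\<^sub>v qR))
       + dL \<bullet> ((HyL*IF2C) *\<^sub>v qR) - dR \<bullet> ((HyR*IC2F) *\<^sub>v pL) - 2*\<tau>*(pL \<bullet> ((HyL*IF2C) *\<^sub>v qR)) \<ge> 0"
    proof (rule small_ineq[OF _ _ _ _ car(2) sym(2) psd(2) car(4) sym(4) psd(4) I _ _ tauL tauR])
      show "pL \<in> carrier_vec nyL" "dL \<in> carrier_vec nyL" "qR \<in> carrier_vec nyR" "dR \<in> carrier_vec nyR"
        unfolding pL_def dL_def qR_def dR_def by (rule carrier_vecI, rule red_dim)+
      show "hxL * \<alpha> > 0" "hxR * \<alpha> > 0" using h alpha by simp_all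
    qed
    show "En u ut v vt \<ge> 0"
      unfolding En_def M1 M2 R1 R2 R3 R4 R5 R6 R7 R8 R9 using K1 K2 K3 K4 SI by linarith
   qed
  next
    show "(\<forall>(u :: real \<Rightarrow> real vec) u' u'' (v :: real \<Rightarrow> real vec) v' v''.
          (\<forall>t. u t \<in> carrier_vec (nxL * nyL) \<and> u' t \<in> carrier_vec (nxL * nyL)
               \<and> u'' t \<in> carrier_vec (nxL * nyL)
               \<and> v t \<in> carrier_vec (nxR * nyR) \<and> v' t \<in> carrier_vec (nxR * nyR)
               \<and> v'' t \<in> carrier_vec (nxR * nyR)) \<longrightarrow>
          (\<forall>t. \<forall>i < nxL * nyL. ((\<lambda>s. u s $ i) has_real_derivative (u' t $ i)) (at t)
                            \<and> ((\<lambda>s. u' s $ i) has_real_derivative (u'' t $ i)) (at t)) \<longrightarrow>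
          (\<forall>t. \<forall>i < nxR * nyR. ((\<lambda>s. v s $ i) has_real_derivative (v' t $ i)) (at t)
                            \<and> ((\<lambda>s. v' s $ i) has_real_derivative (v'' t $ i)) (at t)) \<longrightarrow>
          (\<forall>t. let wL = kron (E0L nxL) (1\<^sub>m nyL) *\<^sub>v u t - kron (ELR nxL nxR) IF2C *\<^sub>v v t;
                   wR = kron (E0R nxR) (1\<^sub>m nyR) *\<^sub>v v t - kron (ERL nxL nxR) IC2F *\<^sub>v u t;
                   HLi = kron HxLi (1\<^sub>m nyL); HRi = kron HxRi (1\<^sub>m nyR);
                   SL = kron SxL (1\<^sub>m nyL); SR = kron SxR (1\<^sub>m nyR)
               in u'' t = kron (HxLi * (- MxL + E0L nxL * SxL)) (1\<^sub>m nyL) *\<^sub>v u t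
                          + (1/2) \<cdot>\<^sub>v (HLi *\<^sub>v (SL\<^sup>T *\<^sub>v wL))
                          - \<tau> \<cdot>\<^sub>v (HLi *\<^sub>v wL)
                          - (1/2) \<cdot>\<^sub>v (HLi *\<^sub>v (kron (E0L nxL) (1\<^sub>m nyL) *\<^sub>v (SL *\<^sub>v u t)
                                        - kron (ELR nxL nxR) IF2C *\<^sub>v (SR *\<^sub>v v t)))
                \<and> v'' t = kron (HxRi * (- MxR - E0R nxR * SxR)) (1\<^sub>m nyR) *\<^sub>v v t
                          - (1/2) \<cdot>\<^sub>v (HRi *\<^sub>v (SR\<^sup>T *\<^sub>v wR))
                          - \<tau> \<cdot>\<^sub>v (HRi *\<^sub>v wR)
                          + (1/2) \<cdot>\<^sub>v (HRi *\<^sub>v (kron (E0R nxR) (1\<^sub>m nyR) *\<^sub>v (SR *\<^sub>v v t)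
                                        - kron (ERL nxL nxR) IC2F *\<^sub>v (SL *\<^sub>v u t)))) \<longrightarrow>
          (\<forall>t. ((\<lambda>s. En (u s) (u' s) (v s) (v' s)) has_real_derivative 0) (at t)))"
    proof (intro allI impI)
      fix u u' u'' v v' v'' :: "real \<Rightarrow> real vec"
      assume C: "\<forall>t. u t \<in> carrier_vec (nxL * nyL) \<and> u' t \<in> carrier_vec (nxL * nyL)
               \<and> u'' t \<in> carrier_vec (nxL * nyL)
               \<and> v t \<in> carrier_vec (nxR * nyR) \<and> v' t \<in> carrier_vec (nxR * nyR)
               \<and> v'' t \<in> carrier_vec (nxR * nyR)"
        and DU: "\<forall>t. \<forall>i < nxL * nyL. ((\<lambda>s. u s $ i) has_real_derivative (u' t $ i)) (at t)
                            \<and> ((\<lambda>s. u' s $ i) has_real_derivative (u'' t $ i)) (at t)"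
        and DV: "\<forall>t. \<forall>i < nxR * nyR. ((\<lambda>s. v s $ i) has_real_derivative (v' t $ i)) (at t)
                            \<and> ((\<lambda>s. v' s $ i) has_real_derivative (v'' t $ i)) (at t)"
        and ODE: "\<forall>t. let wL = kron (E0L nxL) (1\<^sub>m nyL) *\<^sub>v u t - kron (ELR nxL nxR) IF2C *\<^sub>v v t;
                   wR = kron (E0R nxR) (1\<^sub>m nyR) *\<^sub>v v t - kron (ERL nxL nxR) IC2F *\<^sub>v u t;
                   HLi = kron HxLi (1\<^sub>m nyL); HRi = kron HxRi (1\<^sub>m nyR);
                   SL = kron SxL (1\<^sub>m nyL); SR = kron SxR (1\<^sub>m nyR)
               in u'' t = kron (HxLi * (- MxL + E0L nxL * SxL)) (1\<^sub>m nyL) *\<^sub>v u t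
                          + (1/2) \<cdot>\<^sub>v (HLi *\<^sub>v (SL\<^sup>T *\<^sub>v wL))
                          - \<tau> \<cdot>\<^sub>v (HLi *\<^sub>v wL)
                          - (1/2) \<cdot>\<^sub>v (HLi *\<^sub>v (kron (E0L nxL) (1\<^sub>m nyL) *\<^sub>v (SL *\<^sub>v u t)
                                        - kron (ELR nxL nxR) IF2C *\<^sub>v (SR *\<^sub>v v t)))
                \<and> v'' t = kron (HxRi * (- MxR - E0R nxR * SxR)) (1\<^sub>m nyR) *\<^sub>v v t
                          - (1/2) \<cdot>\<^sub>v (HRi *\<^sub>v (SR\<^sup>T *\<^sub>v wR))
                          - \<tau> \<cdot>\<^sub>v (HRi *\<^sub>v wR)
                          + (1/2) \<cdot>\<^sub>v (HRi *\<^sub>v (kron (E0R nxR) (1\<^sub>m nyR) *\<^sub>v (SR *\<^sub>v v t)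
                                        - kron (ERL nxL nxR) IC2F *\<^sub>v (SL *\<^sub>v u t)))"
      fix t :: real
      have Cs: "\<And>s. u s \<in> carrier_vec (nxL * nyL)" "\<And>s. u' s \<in> carrier_vec (nxL * nyL)" "\<And>s. u'' s \<in> carrier_vec (nxL * nyL)"
        "\<And>s. v s \<in> carrier_vec (nxR * nyR)" "\<And>s. v' s \<in> carrier_vec (nxR * nyR)" "\<And>s. v'' s \<in> carrier_vec (nxR * nyR)"
        using C by auto
      have DUs: "\<And>i. i < nxL * nyL \<Longrightarrow> ((\<lambda>s. u s $ i) has_real_derivative (u' t $ i)) (at t)"
          "\<And>i. i < nxL * nyL \<Longrightarrow> ((\<lambda>s. u' s $ i) has_real_derivative (u'' t $ i)) (at t)"
        using DU by auto
      have DVs: "\<And>i. i < nxR * nyR \<Longrightarrow> ((\<lambda>s. v s $ i) has_real_derivative (v' t $ i)) (at t)"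
          "\<And>i. i < nxR * nyR \<Longrightarrow> ((\<lambda>s. v' s $ i) has_real_derivative (v'' t $ i)) (at t)"
        using DV by auto
      have DUU: "((\<lambda>s. u s \<bullet> (K *\<^sub>v u s)) has_real_derivative (u' t \<bullet> (K *\<^sub>v u t) + u t \<bullet> (K *\<^sub>v u' t))) (at t)"
        if "K \<in> carrier_mat (nxL*nyL) (nxL*nyL)" for K
        by (rule DL[OF Cs(1) Cs(2) Cs(1) Cs(2) that DUs(1) DUs(1)])
      have DUV: "((\<lambda>s. u s \<bullet> (K *\<^sub>v v s)) has_real_derivative (u' t \<bullet> (K *\<^sub>v v t) + u t \<bullet> (K *\<^sub>v v' t))) (at t)"
        if "K \<in> carrier_mat (nxL*nyL) (nxR*nyR)" for K
        by (rule DL[OF Cs(1) Cs(2) Cs(4) Cs(5) that DUs(1) DVs(1)])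
      have DVU: "((\<lambda>s. v s \<bullet> (K *\<^sub>v u s)) has_real_derivative (v' t \<bullet> (K *\<^sub>v u t) + v t \<bullet> (K *\<^sub>v u' t))) (at t)"
        if "K \<in> carrier_mat (nxR*nyR) (nxL*nyL)" for K
        by (rule DL[OF Cs(4) Cs(5) Cs(1) Cs(2) that DVs(1) DUs(1)])
      have DVV: "((\<lambda>s. v s \<bullet> (K *\<^sub>v v s)) has_real_derivative (v' t \<bullet> (K *\<^sub>v v t) + v t \<bullet> (K *\<^sub>v v' t))) (at t)"
        if "K \<in> carrier_mat (nxR*nyR) (nxR*nyR)" for K
        by (rule DL[OF Cs(4) Cs(5) Cs(4) Cs(5) that DVs(1) DVs(1)])
      have DUt: "((\<lambda>s. u' s \<bullet> (K *\<^sub>v u' s)) has_real_derivative (u'' t \<bullet> (K *\<^sub>v u' t) + u' t \<bullet> (K *\<^sub>v u'' t))) (at t)"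
        if "K \<in> carrier_mat (nxL*nyL) (nxL*nyL)" for K
        by (rule DL[OF Cs(2) Cs(3) Cs(2) Cs(3) that DUs(2) DUs(2)])
      have DVt: "((\<lambda>s. v' s \<bullet> (K *\<^sub>v v' s)) has_real_derivative (v'' t \<bullet> (K *\<^sub>v v' t) + v' t \<bullet> (K *\<^sub>v v'' t))) (at t)"
        if "K \<in> carrier_mat (nxR*nyR) (nxR*nyR)" for K
        by (rule DL[OF Cs(5) Cs(6) Cs(5) Cs(6) that DVs(2) DVs(2)])
      have Ec: "E0L nxL \<in> carrier_mat nxL nxL" "E0R nxR \<in> carrier_mat nxR nxR" "ELR nxL nxR \<in> carrier_mat nxL nxR"
          "ERL nxL nxR \<in> carrier_mat nxR nxL" by (rule E_car)+
      have kc1: "kron HxL HyL \<in> carrier_mat (nxL*nyL) (nxL*nyL)" by (rule kron_car[OF car(1) car(2)])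
      have kc2: "kron HxR HyR \<in> carrier_mat (nxR*nyR) (nxR*nyR)" by (rule kron_car[OF car(3) car(4)])
      have kc3: "kron MxL HyL \<in> carrier_mat (nxL*nyL) (nxL*nyL)" by (rule kron_car[OF car(7) car(2)])
      have kc4: "kron (E0L nxL * SxL) HyL \<in> carrier_mat (nxL*nyL) (nxL*nyL)"
        by (rule kron_car[OF mult_carrier_mat[OF Ec(1) car(9)] car(2)])
      have kc5: "kron (E0L nxL) HyL \<in> carrier_mat (nxL*nyL) (nxL*nyL)" by (rule kron_car[OF Ec(1) car(2)])
      have kc6: "kron MxR HyR \<in> carrier_mat (nxR*nyR) (nxR*nyR)" by (rule kron_car[OF car(8) car(4)])
      have kc7: "kron (E0R nxR * SxR) HyR \<in> carrier_mat (nxR*nyR) (nxR*nyR)"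
        by (rule kron_car[OF mult_carrier_mat[OF Ec(2) car(10)] car(4)])
      have kc8: "kron (E0R nxR) HyR \<in> carrier_mat (nxR*nyR) (nxR*nyR)" by (rule kron_car[OF Ec(2) car(4)])
      have kc9: "kron (SxL\<^sup>T * ELR nxL nxR) (HyL * IF2C) \<in> carrier_mat (nxL*nyL) (nxR*nyR)"
        by (rule kron_car[OF mult_carrier_mat[OF transpose_carrier_mat[THEN iffD2, OF car(9)] Ec(3)] mult_carrier_mat[OF car(2) car(11)]])
      have kc10: "kron (SxR\<^sup>T * ERL nxL nxR) (HyR * IC2F) \<in> carrier_mat (nxR*nyR) (nxL*nyL)"
        by (rule kron_car[OF mult_carrier_mat[OF transpose_carrier_mat[THEN iffD2, OF car(10)] Ec(4)] mult_carrier_mat[OF car(4) car(12)]])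
      have kc11: "kron (ELR nxL nxR) (HyL * IF2C) \<in> carrier_mat (nxL*nyL) (nxR*nyR)"
        by (rule kron_car[OF Ec(3) mult_carrier_mat[OF car(2) car(11)]])
      note t1 = DUt[OF kc1] and t2 = DVt[OF kc2] and t3 = DUU[OF kc3] and t4 = DUU[OF kc4] and t5 = DUU[OF kc5]
        and t6 = DVV[OF kc6] and t7 = DVV[OF kc7] and t8 = DVV[OF kc8] and t9 = DUV[OF kc9] and t10 = DVU[OF kc10]
        and t11 = DUV[OF kc11]
      have deriv: "((\<lambda>s. En (u s) (u' s) (v s) (v' s)) has_real_derivative
          ((u'' t \<bullet> (kron HxL HyL *\<^sub>v u' t) + u' t \<bullet> (kron HxL HyL *\<^sub>v u'' t))
         + (v'' t \<bullet> (kron HxR HyR *\<^sub>v v' t) + v' t \<bullet> (kron HxR HyR *\<^sub>v v'' t))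
         + (u' t \<bullet> (kron MxL HyL *\<^sub>v u t) + u t \<bullet> (kron MxL HyL *\<^sub>v u' t))
         - (u' t \<bullet> (kron (E0L nxL * SxL) HyL *\<^sub>v u t) + u t \<bullet> (kron (E0L nxL * SxL) HyL *\<^sub>v u' t))
         + \<tau> * (u' t \<bullet> (kron (E0L nxL) HyL *\<^sub>v u t) + u t \<bullet> (kron (E0L nxL) HyL *\<^sub>v u' t))
         + (v' t \<bullet> (kron MxR HyR *\<^sub>v v t) + v t \<bullet> (kron MxR HyR *\<^sub>v v' t))
         + (v' t \<bullet> (kron (E0R nxR * SxR) HyR *\<^sub>v v t) + v t \<bullet> (kron (E0R nxR * SxR) HyR *\<^sub>v v' t))
         + \<tau> * (v' t \<bullet> (kron (E0R nxR) HyR *\<^sub>v v t) + v t \<bullet> (kron (E0R nxR) HyR *\<^sub>v v' t))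
         + (u' t \<bullet> (kron (SxL\<^sup>T * ELR nxL nxR) (HyL * IF2C) *\<^sub>v v t) + u t \<bullet> (kron (SxL\<^sup>T * ELR nxL nxR) (HyL * IF2C) *\<^sub>v v' t))
         - (v' t \<bullet> (kron (SxR\<^sup>T * ERL nxL nxR) (HyR * IC2F) *\<^sub>v u t) + v t \<bullet> (kron (SxR\<^sup>T * ERL nxL nxR) (HyR * IC2F) *\<^sub>v u' t))
         - 2 * \<tau> * (u' t \<bullet> (kron (ELR nxL nxR) (HyL * IF2C) *\<^sub>v v t) + u t \<bullet> (kron (ELR nxL nxR) (HyL * IF2C) *\<^sub>v v' t))))
         (at t)"
        unfolding En_def
        by (intro DERIV_add DERIV_diff DERIV_cmult t1 t2 t3 t4 t5 t6 t7 t8 t9 t10 t11)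
      have odes: "u'' t = kron (HxLi * (- MxL + E0L nxL * SxL)) (1\<^sub>m nyL) *\<^sub>v u t
                          + (1/2) \<cdot>\<^sub>v (kron HxLi (1\<^sub>m nyL) *\<^sub>v ((kron SxL (1\<^sub>m nyL))\<^sup>T *\<^sub>v (kron (E0L nxL) (1\<^sub>m nyL) *\<^sub>v u t - kron (ELR nxL nxR) IF2C *\<^sub>v v t)))
                          - \<tau> \<cdot>\<^sub>v (kron HxLi (1\<^sub>m nyL) *\<^sub>v (kron (E0L nxL) (1\<^sub>m nyL) *\<^sub>v u t - kron (ELR nxL nxR) IF2C *\<^sub>v v t))
                          - (1/2) \<cdot>\<^sub>v (kron HxLi (1\<^sub>m nyL) *\<^sub>v (kron (E0L nxL) (1\<^sub>m nyL) *\<^sub>v (kron SxL (1\<^sub>m nyL) *\<^sub>v u t)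
                                        - kron (ELR nxL nxR) IF2C *\<^sub>v (kron SxR (1\<^sub>m nyR) *\<^sub>v v t)))
          \<and> v'' t = kron (HxRi * (- MxR - E0R nxR * SxR)) (1\<^sub>m nyR) *\<^sub>v v t
                          - (1/2) \<cdot>\<^sub>v (kron HxRi (1\<^sub>m nyR) *\<^sub>v ((kron SxR (1\<^sub>m nyR))\<^sup>T *\<^sub>v (kron (E0R nxR) (1\<^sub>m nyR) *\<^sub>v v t - kron (ERL nxL nxR) IC2F *\<^sub>v u t)))
                          - \<tau> \<cdot>\<^sub>v (kron HxRi (1\<^sub>m nyR) *\<^sub>v (kron (E0R nxR) (1\<^sub>m nyR) *\<^sub>v v t - kron (ERL nxL nxR) IC2F *\<^sub>v u t))
                          + (1/2) \<cdot>\<^sub>v (kron HxRi (1\<^sub>m nyR) *\<^sub>v (kron (E0R nxR) (1\<^sub>m nyR) *\<^sub>v (kron SxR (1\<^sub>m nyR) *\<^sub>v v t)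
                                        - kron (ERL nxL nxR) IC2F *\<^sub>v (kron SxL (1\<^sub>m nyL) *\<^sub>v u t)))"
        using ODE[rule_format, of t] unfolding Let_def .
      note EI = energy_identity[OF n car sym HxLi(2) HxRi(2) I(3) Cs(1)[of t] Cs(2)[of t] Cs(3)[of t] Cs(4)[of t] Cs(5)[of t] Cs(6)[of t]
          conjunct1[OF odes] conjunct2[OF odes]]
      have KLs: "(kron HxL HyL)\<^sup>T = kron HxL HyL" "(kron HxR HyR)\<^sup>T = kron HxR HyR"
        using sym by (simp_all add: kron_transpose)
      have s1: "u'' t \<bullet> (kron HxL HyL *\<^sub>v u' t) = u' t \<bullet> (kron HxL HyL *\<^sub>v u'' t)"
        using bf_swap[OF kc1 Cs(3)[of t] Cs(2)[of t]] KLs by simp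
      have s2: "v'' t \<bullet> (kron HxR HyR *\<^sub>v v' t) = v' t \<bullet> (kron HxR HyR *\<^sub>v v'' t)"
        using bf_swap[OF kc2 Cs(6)[of t] Cs(5)[of t]] KLs by simp
      show "((\<lambda>s. En (u s) (u' s) (v s) (v' s)) has_real_derivative 0) (at t)"
        by (rule DERIV_zero_if[OF deriv]) (use EI s1 s2 in linarith)
    qed
  qed
qed

end
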